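(* There exist Hermitian self-orthogonal linear codes with each of the following parameters: over $\mathbb{F}_{16}$: $[4,2,2]_{16}$, $[6,3,3]_{16}$, $[8,4,4]_{16}$, $[34,15,14]_{16}$, $[34,16,12]_{16}$, $[34,17,10]_{16}$; over $\mathbb{F}_{64}$: $[4,2,2]_{64}$, $[6,3,3]_{64}$, $[8,4,4]_{64}$, $[10,4,5]_{64}$, $[10,5,4]_{64}$, $[12,5,6]_{64}$, $[12,6,5]_{64}$, $[14,5,7]_{64}$, $[14,7,6]_{64}$, $[16,6,8]_{64}$, $[16,7,7]_{64}$, $[16,8,6]_{64}$, $[130,45,58]_{64}$, $[130,50,48]_{64}$, $[130,55,38]_{64}$, $[130,60,28]_{64}$, $[130,65,18]_{64}$.
   Context: $[n,k,d]_{Q}$ denotes a linear code over $\mathbb{F}_{Q}$ of length $n$, dimension $k$, minimum Hamming distance $d$. For $Q$ a square, the Hermitian inner product is $(\mathbf{x},\mathbf{y})_H=\sum_i x_iy_i^{\sqrt Q}$, and $\mathcal{C}$ is Hermitian self-orthogonal if $\mathcal{C}\subseteq\mathcal{C}^{\perp_H}$. *)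

theory Defs
  imports Complex_Main "HOL-Library.Function_Algebras"
begin

text \<open>Vectors of length n over a field are modelled as functions nat => 'a
that vanish outside {0..<n}; scalar multiplication is componentwise.\<close>

definition scaleF :: "'a::field \<Rightarrow> (nat \<Rightarrow> 'a) \<Rightarrow> (nat \<Rightarrow> 'a)" where
  "scaleF c x = (\<lambda>i. c * x i)"

definition vecs :: "nat \<Rightarrow> (nat \<Rightarrow> 'a::zero) set" where
  "vecs n = {x. \<forall>i\<ge>n. x i = 0}"

definition hamming_dist :: "nat \<Rightarrow> (nat \<Rightarrow> 'a) \<Rightarrow> (nat \<Rightarrow> 'a) \<Rightarrow> nat" where
  "hamming_dist n x y = card {i\<in>{0..<n}. x i \<noteq> y i}"

definition min_dist :: "nat \<Rightarrow> (nat \<Rightarrow> 'a) set \<Rightarrow> nat" where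
  "min_dist n C = Min {hamming_dist n x y | x y. x \<in> C \<and> y \<in> C \<and> x \<noteq> y}"

definition linear_code :: "nat \<Rightarrow> nat \<Rightarrow> nat \<Rightarrow> (nat \<Rightarrow> 'a::field) set \<Rightarrow> bool" where
  "linear_code n k d C \<longleftrightarrow> C \<subseteq> vecs n \<and> Modules.module.subspace scaleF C
     \<and> Vector_Spaces.vector_space.dim scaleF C = k \<and> min_dist n C = d"

text \<open>Hermitian inner product over F_{q^2}: (x,y)_H = sum x_i y_i^q.\<close>
definition herm_inner :: "nat \<Rightarrow> nat \<Rightarrow> (nat \<Rightarrow> 'a::field) \<Rightarrow> (nat \<Rightarrow> 'a) \<Rightarrow> 'a" where
  "herm_inner q n x y = (\<Sum>i<n. x i * y i ^ q)"

definition herm_self_orth :: "nat \<Rightarrow> nat \<Rightarrow> (nat \<Rightarrow> 'a::field) set \<Rightarrow> bool" where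
  "herm_self_orth q n C \<longleftrightarrow> (\<forall>x\<in>C. \<forall>y\<in>C. herm_inner q n x y = 0)"

end

theory Submission
  imports Defs "HOL-Computational_Algebra.Polynomial"
begin

lemma sum_fun_apply: "(\<Sum>j\<in>J. f j) x = (\<Sum>j\<in>J. f j x)"
  by (induction J rule: infinite_finite_induct) auto

lemma of_nat_card_UNIV:
  assumes "finite (UNIV::'a::field set)"
  shows "of_nat (card (UNIV::'a set)) = (0::'a)"
proof -
  have "(\<Sum>x\<in>(UNIV::'a set). x + 1) = (\<Sum>x\<in>(UNIV::'a set). x)"
    by (rule sum.reindex_bij_witness[of _ "\<lambda>x. x - 1" "\<lambda>x. x + 1"]) auto
  hence "(\<Sum>x\<in>(UNIV::'a set). x) + of_nat (card (UNIV::'a set)) = (\<Sum>x\<in>(UNIV::'a set). x)"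
    by (simp add: sum.distrib)
  thus ?thesis by simp
qed

lemma char2_of_card:
  assumes "card (UNIV::'a::field set) = 2 ^ r" "r > 0"
  shows "(2::'a) = 0"
proof -
  have fin: "finite (UNIV::'a set)" using assms by (metis card.infinite power_not_zero zero_neq_numeral)
  have "(2::'a) ^ r = 0" using of_nat_card_UNIV[OF fin] assms(1) by simp
  thus ?thesis by simp
qed

lemma fermat_field:
  assumes fin: "finite (UNIV::'a::field set)" and x: "x \<noteq> (0::'a)"
  shows "x ^ (card (UNIV::'a set) - 1) = 1"
proof -
  let ?A = "UNIV - {0::'a}"
  have cA: "card ?A = card (UNIV::'a set) - 1" using fin by (simp add: card_Diff_singleton)
  have e1: "(\<Prod>a\<in>?A. x * a) = (\<Prod>a\<in>?A. a)"
    by (rule prod.reindex_bij_witness[of _ "\<lambda>a. a / x" "\<lambda>a. x * a"]) (use x in auto)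
  have e2: "(\<Prod>a\<in>?A. x * a) = x ^ card ?A * (\<Prod>a\<in>?A. a)"
    by (simp add: prod.distrib)
  have e3: "(\<Prod>a\<in>?A. a) \<noteq> 0" using fin by simp
  from e1 e2 e3 have "x ^ card ?A = 1" by simp
  thus ?thesis using cA by simp
qed

lemma fermat_field2:
  assumes fin: "finite (UNIV::'a::field set)"
  shows "(x::'a) ^ card (UNIV::'a set) = x"
proof (cases "x = 0")
  case True
  have "card (UNIV::'a set) > 0" using fin by (simp add: finite_UNIV_card_ge_0)
  thus ?thesis using True by simp
next
  case False
  have "card (UNIV::'a set) > 0" using fin by (simp add: finite_UNIV_card_ge_0)
  hence "x ^ card (UNIV::'a set) = x * x ^ (card (UNIV::'a set) - 1)"
    by (metis Suc_diff_1 power_Suc)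
  thus ?thesis using fermat_field[OF fin False] by simp
qed

lemma char2_neg: assumes "(2::'a::field) = 0" shows "- (x::'a) = x"
proof -
  have "x + x = 2 * x" by simp
  hence "x + x = 0" using assms by simp
  thus ?thesis by (simp add: add_eq_0_iff)
qed

lemma frob_pow:
  assumes "(2::'a::field) = 0"
  shows "((x::'a) + y) ^ (2 ^ r) = x ^ (2 ^ r) + y ^ (2 ^ r)"
proof (induction r)
  case 0
  then show ?case by simp
next
  case (Suc r)
  have sq: "(a + b) ^ 2 = a ^ 2 + (b::'a) ^ 2" for a b
    using assms by (simp add: power2_sum)
  have "(x + y) ^ (2 ^ Suc r) = ((x + y) ^ (2 ^ r)) ^ 2"
    by (simp add: power_mult[symmetric] mult.commute)
  also have "\<dots> = (x ^ (2 ^ r)) ^ 2 + (y ^ (2 ^ r)) ^ 2" using Suc sq by simp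
  also have "\<dots> = x ^ (2 ^ Suc r) + y ^ (2 ^ Suc r)"
    by (simp add: power_mult[symmetric] mult.commute)
  finally show ?case .
qed

lemma frob_sum:
  assumes "(2::'a::field) = 0"
  shows "(\<Sum>i\<in>I. (f i::'a)) ^ (2 ^ r) = (\<Sum>i\<in>I. f i ^ (2 ^ r))"
  by (induction I rule: infinite_finite_induct) (auto simp: frob_pow[OF assms])

lemma poly_sum_lt:
  fixes p :: "'a::field poly"
  assumes "degree p < n"
  shows "poly p x = (\<Sum>i<n. coeff p i * x ^ i)"
proof -
  have "poly p x = (\<Sum>i\<le>degree p. coeff p i * x ^ i)" by (rule poly_altdef)
  also have "\<dots> = (\<Sum>i<n. coeff p i * x ^ i)"
    by (rule sum.mono_neutral_left) (use assms in \<open>auto simp: coeff_eq_0\<close>)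
  finally show ?thesis .
qed

lemma roots_xj_minus_1:
  assumes "j > 0"
  shows "card {x::'a::field. x ^ j = 1} \<le> j"
proof -
  define p :: "'a poly" where "p = monom 1 j + [:-1:]"
  have dp: "degree p = j" unfolding p_def using assms
    by (subst degree_add_eq_left) (auto simp: degree_monom_eq)
  have p0: "p \<noteq> 0" using dp assms by auto
  have "{x. poly p x = 0} = {x::'a. x ^ j = 1}" by (auto simp: p_def poly_monom)
  thus ?thesis using card_poly_roots_bound[OF p0] dp by simp
qed

lemma roots_xj_minus_1_finite:
  assumes "j > 0"
  shows "finite {x::'a::field. x ^ j = 1}"
proof -
  define p :: "'a poly" where "p = monom 1 j + [:-1:]"
  have dp: "degree p = j" unfolding p_def using assms
    by (subst degree_add_eq_left) (auto simp: degree_monom_eq)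
  have p0: "p \<noteq> 0" using dp assms by auto
  have "{x. poly p x = 0} = {x::'a. x ^ j = 1}" by (auto simp: p_def poly_monom)
  thus ?thesis using poly_roots_finite[OF p0] by simp
qed

lemma power_sum_vanish:
  fixes A :: "'a::field set"
  assumes fin: "finite A" and z: "0 \<in> A" and mult: "\<And>x y. x\<in>A \<Longrightarrow> y\<in>A \<Longrightarrow> x*y \<in> A"
    and j: "0 < j" "j + 1 < card A"
  shows "(\<Sum>a\<in>A. a^j) = 0"
proof -
  have cA: "card (A - {0}) = card A - 1" using fin z by (simp add: card_Diff_singleton)
  have "\<not> (A - {0} \<subseteq> {x. x ^ j = 1})"
  proof
    assume "A - {0} \<subseteq> {x. x ^ j = 1}"
    hence "card (A - {0}) \<le> card {x::'a. x ^ j = 1}"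
      by (rule card_mono[OF roots_xj_minus_1_finite[OF j(1)]])
    thus False using roots_xj_minus_1[OF j(1), where 'a='a] cA j by linarith
  qed
  then obtain y where y: "y \<in> A" "y \<noteq> 0" "y ^ j \<noteq> 1" by auto
  have inj: "inj_on (\<lambda>a. y * a) A" using y by (auto simp: inj_on_def)
  have img: "(\<lambda>a. y * a) ` A = A"
    by (rule card_subset_eq[OF fin]) (use mult y inj in \<open>auto simp: card_image\<close>)
  have "(\<Sum>a\<in>A. a^j) = (\<Sum>a\<in>(\<lambda>a. y * a) ` A. a^j)" using img by simp
  also have "\<dots> = (\<Sum>a\<in>A. (y * a)^j)" by (subst sum.reindex[OF inj]) simp
  also have "\<dots> = y ^ j * (\<Sum>a\<in>A. a^j)" by (simp add: power_mult_distrib sum_distrib_left)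
  finally have "(y ^ j - 1) * (\<Sum>a\<in>A. a^j) = 0" by (simp add: algebra_simps)
  thus ?thesis using y by simp
qed

lemma sum_poly_over:
  fixes A :: "'a::field set"
  assumes fin: "finite A" and z: "0 \<in> A" and mult: "\<And>x y. x\<in>A \<Longrightarrow> y\<in>A \<Longrightarrow> x*y \<in> A"
    and ferm: "\<And>a. a \<in> A \<Longrightarrow> a ^ card A = a" and char2: "(2::'a) = 0"
    and ev: "of_nat (card A) = (0::'a)" and c2: "card A \<ge> 2"
    and deg: "degree H < card A"
  shows "(\<Sum>a\<in>A. poly H a) = coeff H (card A - 1)"
proof -
  let ?M = "card A"
  have S: "(\<Sum>a\<in>A. a ^ i) = (if i = ?M - 1 then 1 else 0)" if i: "i < ?M" for i
  proof (cases "i = 0")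
    case True
    then show ?thesis using ev c2 by simp
  next
    case False
    show ?thesis
    proof (cases "i = ?M - 1")
      case True
      have "(\<Sum>a\<in>A. a ^ i) = (\<Sum>a\<in>A - {0}. a ^ i)"
        by (rule sum.mono_neutral_right) (use fin False in auto)
      also have "\<dots> = (\<Sum>a\<in>A - {0}. 1)"
      proof (rule sum.cong[OF refl])
        fix a assume a: "a \<in> A - {0}"
        have "?M = Suc i" using True c2 by simp
        hence "a * a ^ i = a * 1" using ferm[of a] a by (simp del: power_Suc add: power_Suc[symmetric])
        thus "a ^ i = 1" using a by simp
      qed
      also have "\<dots> = of_nat (?M - 1)" using fin z by (simp add: card_Diff_singleton)
      also have "\<dots> = of_nat ?M - 1" using c2 by (simp add: of_nat_diff)
      also have "\<dots> = 1" using ev char2_neg[OF char2, of 1] by simp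
      finally show ?thesis using True by simp
    next
      case False2: False
      have "(\<Sum>a\<in>A. a ^ i) = 0"
        by (rule power_sum_vanish[OF fin z mult]) (use False False2 i in auto)
      then show ?thesis using False2 by simp
    qed
  qed
  have "(\<Sum>a\<in>A. poly H a) = (\<Sum>a\<in>A. \<Sum>i<?M. coeff H i * a ^ i)"
    using poly_sum_lt[OF deg] by simp
  also have "\<dots> = (\<Sum>i<?M. coeff H i * (\<Sum>a\<in>A. a ^ i))"
    by (subst sum.swap) (simp add: sum_distrib_left)
  also have "\<dots> = (\<Sum>i<?M. if i = ?M - 1 then coeff H i else 0)"
    by (rule sum.cong[OF refl]) (simp add: S)
  also have "\<dots> = coeff H (?M - 1)" using c2 by simp
  finally show ?thesis .
qed

lemma roots_pow_eq:
  assumes "j > 0"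
  shows "finite {x::'a::field. x ^ j = c} \<and> card {x::'a::field. x ^ j = c} \<le> j"
proof -
  define p :: "'a poly" where "p = monom 1 j + [:-c:]"
  have dp: "degree p = j" unfolding p_def using assms
    by (subst degree_add_eq_left) (auto simp: degree_monom_eq)
  have p0: "p \<noteq> 0" using dp assms by auto
  have "{x. poly p x = 0} = {x::'a. x ^ j = c}" by (auto simp: p_def poly_monom)
  thus ?thesis using card_poly_roots_bound[OF p0] poly_roots_finite[OF p0] dp by simp
qed

lemma roots_frob:
  assumes "q \<ge> 2"
  shows "finite {x::'a::field. x ^ q = x} \<and> card {x::'a::field. x ^ q = x} \<le> q"
proof -
  define p :: "'a poly" where "p = monom 1 q + [:0, -1:]"
  have dp: "degree p = q" unfolding p_def using assms
    by (subst degree_add_eq_left) (auto simp: degree_monom_eq)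
  have p0: "p \<noteq> 0" using dp assms by auto
  have "{x. poly p x = 0} = {x::'a. x ^ q = x}" by (auto simp: p_def poly_monom)
  thus ?thesis using card_poly_roots_bound[OF p0] poly_roots_finite[OF p0] dp by simp
qed

lemma card_subfield:
  assumes cU: "card (UNIV::'a::field set) = q * q" and q: "q \<ge> 2"
  shows "card {x::'a. x ^ q = x} = q"
proof -
  let ?F = "{x::'a. x ^ q = x}"
  have fin: "finite (UNIV::'a set)" using cU q by (metis card.infinite mult_is_0 not_numeral_le_zero)
  have up: "card ?F \<le> q" using roots_frob[OF q, where 'a='a] by simp
  have finF: "finite ?F" using roots_frob[OF q, where 'a='a] by simp
  have cov: "UNIV = (\<Union>c\<in>?F. {x::'a. x ^ (q+1) = c})"
  proof -
    have "(x ^ (q+1)) ^ q = x ^ (q+1)" for x :: 'a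
    proof -
      have "(x ^ (q+1)) ^ q = x ^ (q * q) * x ^ q" by (simp add: power_mult[symmetric] power_add algebra_simps)
      also have "\<dots> = x * x ^ q" using fermat_field2[OF fin, of x] cU by simp
      finally show ?thesis by simp
    qed
    thus ?thesis by auto
  qed
  have "q * q = card (\<Union>c\<in>?F. {x::'a. x ^ (q+1) = c})" using cov cU by simp
  also have "\<dots> \<le> (\<Sum>c\<in>?F. card {x::'a. x ^ (q+1) = c})" by (rule card_UN_le[OF finF])
  also have "\<dots> \<le> (\<Sum>c\<in>?F. q + 1)" by (rule sum_mono) (use roots_pow_eq[of "q+1"] in auto)
  also have "\<dots> = card ?F * (q + 1)" by simp
  finally have lo: "q * q \<le> card ?F * (q + 1)" .
  show ?thesis
  proof (rule ccontr)
    assume "card ?F \<noteq> q"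
    hence "card ?F \<le> q - 1" using up by simp
    hence "card ?F * (q + 1) \<le> (q - 1) * (q + 1)" by (rule mult_le_mono1)
    also have "(q - 1) * (q + 1) < q * q" using q by (cases q) (auto simp: algebra_simps)
    finally show False using lo by simp
  qed
qed

section \<open>Generic evaluation blocks\<close>

definition wt :: "nat \<Rightarrow> (nat \<Rightarrow> 'a::zero) \<Rightarrow> nat" where
  "wt n x = card {i\<in>{0..<n}. x i \<noteq> 0}"

definition polyOf :: "nat \<Rightarrow> (nat \<Rightarrow> 'a::field) \<Rightarrow> 'a poly" where
  "polyOf k \<alpha> = (\<Sum>j<k. monom (\<alpha> j) j)"

lemma poly_polyOf: "poly (polyOf k \<alpha>) x = (\<Sum>j<k. \<alpha> j * x ^ j)"
  by (simp add: polyOf_def poly_sum poly_monom)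

lemma coeff_polyOf: "coeff (polyOf k \<alpha>) j = (if j < k then \<alpha> j else 0)"
  by (simp add: polyOf_def coeff_sum)

lemma degree_polyOf: "k \<ge> 1 \<Longrightarrow> degree (polyOf k \<alpha>) \<le> k - 1"
  by (rule degree_le) (auto simp: coeff_polyOf)

definition evB :: "nat \<Rightarrow> (nat \<Rightarrow> 'a) \<Rightarrow> (nat \<Rightarrow> 'a) \<Rightarrow> bool \<Rightarrow> nat \<Rightarrow> nat \<Rightarrow> nat \<Rightarrow> 'a::field" where
  "evB N' p z fl k j i = (if i < N' then z i * p i ^ j else if fl \<and> i = N' \<and> j = k - 1 then 1 else 0)"

definition evC :: "nat \<Rightarrow> (nat \<Rightarrow> 'a) \<Rightarrow> (nat \<Rightarrow> 'a) \<Rightarrow> bool \<Rightarrow> nat \<Rightarrow> (nat \<Rightarrow> 'a) \<Rightarrow> nat \<Rightarrow> 'a::field" where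
  "evC N' p z fl k \<alpha> i = (if i < N' then z i * poly (polyOf k \<alpha>) (p i) else if fl \<and> i = N' then \<alpha> (k - 1) else 0)"

lemma evC_sum:
  assumes "k \<ge> 1"
  shows "(\<Sum>j<k. scaleF (\<alpha> j) (evB N' p z fl k j)) = evC N' p z fl k \<alpha>"
proof
  fix i
  show "(\<Sum>j<k. scaleF (\<alpha> j) (evB N' p z fl k j)) i = evC N' p z fl k \<alpha> i"
  proof (cases "i < N'")
    case True
    then show ?thesis
      by (simp add: sum_fun_apply scaleF_def evB_def evC_def poly_polyOf sum_distrib_left algebra_simps)
  next
    case False
    have "(\<Sum>j<k. \<alpha> j * (if fl \<and> i = N' \<and> j = k - 1 then 1 else 0)) =
          (\<Sum>j<k. if j = k - 1 then (if fl \<and> i = N' then \<alpha> j else 0) else 0)"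
      by (rule sum.cong) auto
    also have "\<dots> = (if fl \<and> i = N' then \<alpha> (k - 1) else 0)"
      using assms by (subst sum.delta) auto
    finally show ?thesis using False
      by (simp add: sum_fun_apply scaleF_def evB_def evC_def)
  qed
qed

lemma evB_vecs: "evB N' p z fl k j \<in> vecs (N' + (if fl then 1 else 0))"
  by (auto simp: vecs_def evB_def)

lemma evC_vecs: "evC N' p z fl k \<alpha> \<in> vecs (N' + (if fl then 1 else 0))"
  by (auto simp: vecs_def evC_def)

lemma polyOf_zero_iff: "polyOf k \<alpha> = 0 \<longleftrightarrow> (\<forall>j<k. \<alpha> j = 0)"
proof
  assume "polyOf k \<alpha> = 0"
  then show "\<forall>j<k. \<alpha> j = 0" using coeff_polyOf[of k \<alpha>] by (metis coeff_0)
next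
  assume "\<forall>j<k. \<alpha> j = 0"
  then show "polyOf k \<alpha> = 0" by (intro poly_eqI) (simp add: coeff_polyOf)
qed

lemma roots_on_index:
  fixes G :: "'a::field poly"
  assumes G: "G \<noteq> 0" and inj: "inj_on p R"
  shows "card {i\<in>R. poly G (p i) = 0} \<le> degree G"
proof -
  have "card {i\<in>R. poly G (p i) = 0} = card (p ` {i\<in>R. poly G (p i) = 0})"
    by (rule card_image[symmetric]) (use inj in \<open>auto intro: inj_on_subset\<close>)
  also have "\<dots> \<le> card {x. poly G x = 0}"
    by (rule card_mono[OF poly_roots_finite[OF G]]) auto
  also have "\<dots> \<le> degree G" by (rule card_poly_roots_bound[OF G])
  finally show ?thesis .
qed

lemma evC_indep:
  fixes p z :: "nat \<Rightarrow> 'a::field"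
  assumes inj: "inj_on p {..<N'}" and kZ: "k \<le> card {i. i < N' \<and> z i \<noteq> 0}" and k1: "k \<ge> 1"
    and zero: "evC N' p z fl k \<alpha> = 0"
  shows "\<forall>j<k. \<alpha> j = 0"
proof (rule ccontr)
  assume "\<not> (\<forall>j<k. \<alpha> j = 0)"
  hence G: "polyOf k \<alpha> \<noteq> 0" using polyOf_zero_iff by blast
  let ?I = "{i. i < N' \<and> z i \<noteq> 0}"
  have "\<forall>i\<in>?I. poly (polyOf k \<alpha>) (p i) = 0"
  proof
    fix i assume i: "i \<in> ?I"
    have "evC N' p z fl k \<alpha> i = 0" using zero by simp
    thus "poly (polyOf k \<alpha>) (p i) = 0" using i by (simp add: evC_def)
  qed
  hence "{i\<in>?I. poly (polyOf k \<alpha>) (p i) = 0} = ?I" by auto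
  moreover have "card {i\<in>?I. poly (polyOf k \<alpha>) (p i) = 0} \<le> degree (polyOf k \<alpha>)"
    by (rule roots_on_index[OF G]) (use inj in \<open>auto intro: inj_on_subset\<close>)
  ultimately show False using degree_polyOf[OF k1, of \<alpha>] kZ k1 by simp
qed

lemma evC_weight:
  fixes p z :: "nat \<Rightarrow> 'a::field"
  assumes inj: "inj_on p {..<N'}" and kZ: "k \<le> card {i. i < N' \<and> z i \<noteq> 0}" and k1: "k \<ge> 1"
    and nz: "\<exists>j<k. \<alpha> j \<noteq> 0"
  shows "wt (N' + (if fl then 1 else 0)) (evC N' p z fl k \<alpha>) \<ge> card {i. i < N' \<and> z i \<noteq> 0} + 1 - k + (if fl then 1 else 0)"
proof -
  let ?I = "{i. i < N' \<and> z i \<noteq> 0}"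
  let ?G = "polyOf k \<alpha>"
  let ?R = "{i\<in>?I. poly ?G (p i) = 0}"
  let ?E = "(if fl \<and> \<alpha> (k - 1) \<noteq> 0 then {N'} else {})"
  let ?N = "N' + (if fl then 1 else 0)"
  have G: "?G \<noteq> 0" using nz polyOf_zero_iff by blast
  have finI: "finite ?I" by (rule finite_subset[of _ "{..<N'}"]) auto
  have R: "card ?R \<le> degree ?G"
    by (rule roots_on_index[OF G]) (use inj in \<open>auto intro: inj_on_subset\<close>)
  have sub: "(?I - ?R) \<union> ?E \<subseteq> {i\<in>{0..<?N}. evC N' p z fl k \<alpha> i \<noteq> 0}"
    by (auto simp: evC_def)
  have "card ((?I - ?R) \<union> ?E) \<le> wt ?N (evC N' p z fl k \<alpha>)"
    unfolding wt_def by (rule card_mono[OF _ sub]) auto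
  moreover have "card ((?I - ?R) \<union> ?E) = card (?I - ?R) + card ?E"
    by (rule card_Un_disjoint) (use finI in auto)
  moreover have "card (?I - ?R) = card ?I - card ?R"
    by (rule card_Diff_subset) (use finI in \<open>auto intro: finite_subset\<close>)
  moreover have "card ?R \<le> card ?I" by (rule card_mono[OF finI]) auto
  moreover have dG: "degree ?G \<le> k - 1" by (rule degree_polyOf[OF k1])
  moreover have "\<alpha> (k - 1) = 0 \<Longrightarrow> degree ?G \<le> k - 2 \<and> k \<ge> 2"
  proof -
    assume a: "\<alpha> (k - 1) = 0"
    have "k \<ge> 2"
    proof (rule ccontr)
      assume "\<not> k \<ge> 2" hence "k = 1" using k1 by simp
      thus False using nz a by auto
    qed
    have "degree ?G \<le> k - 2"
    proof (rule degree_le, intro allI impI)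
      fix i assume i: "k - 2 < i"
      show "coeff ?G i = 0"
      proof (cases "i < k")
        case True
        hence "i = k - 1" using i \<open>k \<ge> 2\<close> by arith
        thus ?thesis using a by (simp add: coeff_polyOf)
      qed (simp add: coeff_polyOf)
    qed
    thus ?thesis using \<open>k \<ge> 2\<close> by simp
  qed
  ultimately show ?thesis using R kZ k1
    by (cases "\<alpha> (k - 1) = 0"; cases fl) (simp_all; linarith)+
qed

lemma evC_witness:
  fixes p z :: "nat \<Rightarrow> 'a::field"
  assumes inj: "inj_on p {..<N'}" and kZ: "k \<le> card {i. i < N' \<and> z i \<noteq> 0}" and k1: "k \<ge> 1"
  shows "\<exists>\<alpha>. \<alpha> (k - 1) = 1 \<and>
    wt (N' + (if fl then 1 else 0)) (evC N' p z fl k \<alpha>) = card {i. i < N' \<and> z i \<noteq> 0} + 1 - k + (if fl then 1 else 0)"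
proof -
  let ?I = "{i. i < N' \<and> z i \<noteq> 0}"
  let ?N = "N' + (if fl then 1 else 0)"
  have finI: "finite ?I" by (rule finite_subset[of _ "{..<N'}"]) auto
  have "k - 1 \<le> card ?I" using kZ by simp
  then obtain T where T: "T \<subseteq> ?I" "card T = k - 1" "finite T"
    by (rule obtain_subset_with_card_n)
  define G where "G = (\<Prod>t\<in>T. [:- p t, 1:])"
  have Gnz: "\<And>t. t \<in> T \<Longrightarrow> [:- p t, 1:] \<noteq> 0" by simp
  have dG: "degree G = k - 1" unfolding G_def
    by (subst degree_prod_sum_eq) (auto simp: T)
  have lG: "coeff G (k - 1) = 1"
    using lead_coeff_prod[of "\<lambda>t. [:- p t, 1:]" T] dG unfolding G_def by simp
  define \<alpha> where "\<alpha> = coeff G"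
  have pG: "polyOf k \<alpha> = G"
    by (rule poly_eqI) (use dG k1 in \<open>auto simp: coeff_polyOf \<alpha>_def coeff_eq_0\<close>)
  have root: "poly G (p i) = 0 \<longleftrightarrow> i \<in> T" if i: "i < N'" for i
  proof -
    have "poly G (p i) = (\<Prod>t\<in>T. p i - p t)" by (simp add: G_def poly_prod)
    also have "\<dots> = 0 \<longleftrightarrow> (\<exists>t\<in>T. p i = p t)" using T(3) by simp
    also have "\<dots> \<longleftrightarrow> i \<in> T"
      using T(1) inj i by (auto simp: inj_on_def)
    finally show ?thesis .
  qed
  have eqset: "{i\<in>{0..<?N}. evC N' p z fl k \<alpha> i \<noteq> 0} = (?I - T) \<union> (if fl then {N'} else {})"
  proof -
    have lA: "\<alpha> (k - 1) = 1" using lG by (simp add: \<alpha>_def)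
    show ?thesis using root lA by (auto simp: evC_def pG)
  qed
  have "wt ?N (evC N' p z fl k \<alpha>) = card (?I - T) + card (if fl then {N'} else ({}::nat set))"
    unfolding wt_def eqset by (rule card_Un_disjoint) (use finI in auto)
  also have "card (?I - T) = card ?I - (k - 1)"
    using card_Diff_subset[OF T(3) T(1)] T(2) by simp
  finally have wtE: "wt ?N (evC N' p z fl k \<alpha>) = card ?I - (k - 1) + (if fl then 1 else 0)" by simp
  have "\<alpha> (k - 1) = 1" using lG by (simp add: \<alpha>_def)
  then show ?thesis using wtE kZ k1 by (intro exI[of _ \<alpha>]) auto
qed

lemma vs_scaleF: "vector_space (scaleF :: 'a::field \<Rightarrow> (nat \<Rightarrow> 'a) \<Rightarrow> (nat \<Rightarrow> 'a))"
  by unfold_locales (auto simp: scaleF_def algebra_simps)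

interpretation fvs: vector_space "scaleF :: 'a::field \<Rightarrow> (nat \<Rightarrow> 'a) \<Rightarrow> (nat \<Rightarrow> 'a)"
  by (rule vs_scaleF)

lemma scaleF_apply: "scaleF c x i = c * x i" by (simp add: scaleF_def)

lemma sum_split_add: "(\<Sum>i<a+b. f i) = (\<Sum>i<a. f i) + (\<Sum>j<b. f (a+j))" for b :: nat
  by (induction b) (auto simp: add.assoc)



definition prodc :: "'a::field \<Rightarrow> nat \<Rightarrow> (nat \<Rightarrow> 'a) \<Rightarrow> (nat \<Rightarrow> 'a) \<Rightarrow> nat \<Rightarrow> 'a" where
  "prodc \<mu> N u v i = (if i < N then u i + v i else if i < 2*N then u (i - N) + \<mu> * v (i - N) else 0)"

lemma hamming_wt: "hamming_dist n x y = wt n (x - (y :: nat \<Rightarrow> 'a::ab_group_add))"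
  by (simp add: hamming_dist_def wt_def)

lemma wt_diff_le: "wt n (x - y) \<le> wt n x + wt n (y :: nat \<Rightarrow> 'a::ab_group_add)"
proof -
  have "{i\<in>{0..<n}. (x - y) i \<noteq> 0} \<subseteq> {i\<in>{0..<n}. x i \<noteq> 0} \<union> {i\<in>{0..<n}. y i \<noteq> 0}" by auto
  hence "wt n (x - y) \<le> card ({i\<in>{0..<n}. x i \<noteq> 0} \<union> {i\<in>{0..<n}. y i \<noteq> 0})"
    unfolding wt_def by (intro card_mono) auto
  also have "\<dots> \<le> wt n x + wt n y" unfolding wt_def by (rule card_Un_le)
  finally show ?thesis .
qed

lemma wt_prodc:
  assumes "2*N \<le> n"
  shows "wt n (prodc \<mu> N u v) = wt N (\<lambda>i. u i + v i) + wt N (\<lambda>i. u i + \<mu> * v i)"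
proof -
  let ?A = "{i\<in>{0..<N}. u i + v i \<noteq> 0}"
  let ?B = "{i\<in>{0..<N}. u i + \<mu> * v i \<noteq> 0}"
  have eq: "{i\<in>{0..<n}. prodc \<mu> N u v i \<noteq> 0} = ?A \<union> (\<lambda>i. N + i) ` ?B"
  proof (rule set_eqI)
    fix x
    show "x \<in> {i\<in>{0..<n}. prodc \<mu> N u v i \<noteq> 0} \<longleftrightarrow> x \<in> ?A \<union> (\<lambda>i. N + i) ` ?B"
    proof (cases "x < N")
      case True
      then show ?thesis using assms by (auto simp: prodc_def)
    next
      case False
      show ?thesis
      proof (cases "x < 2*N")
        case True
        have "x \<in> (\<lambda>i. N + i) ` ?B \<longleftrightarrow> x - N \<in> ?B"
          using False True by (auto simp: image_iff intro!: bexI[of _ "x - N"])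
        then show ?thesis using False True assms by (auto simp: prodc_def)
      next
        case False2: False
        then show ?thesis using False by (auto simp: prodc_def)
      qed
    qed
  qed
  have "wt n (prodc \<mu> N u v) = card (?A \<union> (\<lambda>i. N + i) ` ?B)" unfolding wt_def eq ..
  also have "\<dots> = card ?A + card ((\<lambda>i. N + i) ` ?B)" by (rule card_Un_disjoint) auto
  also have "card ((\<lambda>i. N + i) ` ?B) = card ?B" by (rule card_image) (auto simp: inj_on_def)
  finally show ?thesis unfolding wt_def by simp
qed

lemma ident_prod:
  fixes a b c d m mq :: "'a::comm_ring_1"
  shows "(a+b)*(c+d) + (a + m*b)*(c + mq*d) = 2*(a*c) + (1+mq)*(a*d) + (1+m)*(b*c) + (1 + m*mq)*(b*d)"
  by (simp add: algebra_simps)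

lemma herm_prodc:
  fixes u v u' v' :: "nat \<Rightarrow> 'a::field"
  assumes n: "2*N \<le> n" and c2: "(2::'a) = 0" and q: "q = 2^r"
  shows "herm_inner q n (prodc \<mu> N u v) (prodc \<mu> N u' v') =
     (1 + \<mu>^q) * herm_inner q N u v' + (1 + \<mu>) * herm_inner q N v u' + (1 + \<mu>^(q+1)) * herm_inner q N v v'"
proof -
  let ?c = "prodc \<mu> N u v" and ?c' = "prodc \<mu> N u' v'"
  have "herm_inner q n ?c ?c' = (\<Sum>i<N+N. ?c i * ?c' i ^ q)"
    unfolding herm_inner_def
    by (rule sum.mono_neutral_right) (use n in \<open>auto simp: prodc_def\<close>)
  also have "\<dots> = (\<Sum>i<N. ?c i * ?c' i ^ q) + (\<Sum>i<N. ?c (N+i) * ?c' (N+i) ^ q)"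
    by (rule sum_split_add)
  also have "\<dots> = (\<Sum>i<N. ?c i * ?c' i ^ q + ?c (N+i) * ?c' (N+i) ^ q)"
    by (simp add: sum.distrib)
  also have "\<dots> = (\<Sum>i<N. (1 + \<mu>^q) * (u i * v' i ^ q) + (1 + \<mu>) * (v i * u' i ^ q) + (1 + \<mu>^(q+1)) * (v i * v' i ^ q))"
  proof (rule sum.cong[OF refl])
    fix i assume i: "i \<in> {..<N}"
    have f1: "(u' i + v' i) ^ q = u' i ^ q + v' i ^ q" unfolding q by (rule frob_pow[OF c2])
    have f2: "(u' i + \<mu> * v' i) ^ q = u' i ^ q + \<mu> ^ q * v' i ^ q"
      unfolding q by (simp add: frob_pow[OF c2] power_mult_distrib)
    have "?c i * ?c' i ^ q + ?c (N+i) * ?c' (N+i) ^ q =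
       (u i + v i) * (u' i ^ q + v' i ^ q) + (u i + \<mu> * v i) * (u' i ^ q + \<mu> ^ q * v' i ^ q)"
      using i f1 f2 by (simp add: prodc_def)
    also have "\<dots> = 2 * (u i * u' i ^ q) + (1 + \<mu>^q) * (u i * v' i ^ q) + (1 + \<mu>) * (v i * u' i ^ q) + (1 + \<mu> * \<mu>^q) * (v i * v' i ^ q)"
      by (rule ident_prod)
    finally show "?c i * ?c' i ^ q + ?c (N+i) * ?c' (N+i) ^ q =
       (1 + \<mu>^q) * (u i * v' i ^ q) + (1 + \<mu>) * (v i * u' i ^ q) + (1 + \<mu>^(q+1)) * (v i * v' i ^ q)"
      using c2 by simp
  qed
  also have "\<dots> = (1 + \<mu>^q) * herm_inner q N u v' + (1 + \<mu>) * herm_inner q N v u' + (1 + \<mu>^(q+1)) * herm_inner q N v v'"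
    unfolding herm_inner_def by (simp add: sum.distrib sum_distrib_left)
  finally show ?thesis .
qed

lemma indep_inj:
  fixes b :: "nat \<Rightarrow> nat \<Rightarrow> 'a::field"
  assumes ind: "\<And>\<gamma>. (\<Sum>i<k. scaleF (\<gamma> i) (b i)) = 0 \<Longrightarrow> \<forall>i<k. \<gamma> i = 0"
  shows "inj_on b {..<k}"
proof (rule inj_onI, rule ccontr)
  fix i j assume i: "i \<in> {..<k}" and j: "j \<in> {..<k}" and eq: "b i = b j" and ne: "i \<noteq> j"
  define \<gamma> where "\<gamma> l = (if l = i then 1 else if l = j then -1 else (0::'a))" for l
  have "(\<Sum>l<k. scaleF (\<gamma> l) (b l)) = (\<Sum>l\<in>{i,j}. scaleF (\<gamma> l) (b l))"
    by (rule sum.mono_neutral_right) (use i j in \<open>auto simp: \<gamma>_def scaleF_def\<close>)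
  also have "\<dots> = 0" using ne eq by (auto simp: \<gamma>_def scaleF_def)
  finally have "\<forall>l<k. \<gamma> l = 0" by (rule ind)
  thus False using i by (auto simp: \<gamma>_def)
qed

lemma sum_vecs:
  assumes "\<And>j. B j \<in> vecs N"
  shows "(\<Sum>j<k. scaleF (\<alpha> j) (B j)) \<in> vecs N"
  using assms by (auto simp: vecs_def sum_fun_apply scaleF_def)

lemma product_code:
  fixes B1 B2 :: "nat \<Rightarrow> nat \<Rightarrow> 'a::field" and S1 S2 :: "(nat \<Rightarrow> 'a) \<Rightarrow> nat \<Rightarrow> 'a" and \<mu> :: 'a
  assumes S1def: "\<And>\<alpha>. S1 \<alpha> = (\<Sum>j<k1. scaleF (\<alpha> j) (B1 j))"
    and S2def: "\<And>\<beta>. S2 \<beta> = (\<Sum>j<k2. scaleF (\<beta> j) (B2 j))"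
    and B1v: "\<And>j. B1 j \<in> vecs N" and B2v: "\<And>j. B2 j \<in> vecs N"
    and ind1: "\<And>\<alpha>. S1 \<alpha> = 0 \<Longrightarrow> \<forall>j<k1. \<alpha> j = 0"
    and ind2: "\<And>\<beta>. S2 \<beta> = 0 \<Longrightarrow> \<forall>j<k2. \<beta> j = 0"
    and w1: "\<And>\<alpha>. \<exists>j<k1. \<alpha> j \<noteq> 0 \<Longrightarrow> d1 \<le> wt N (S1 \<alpha>)"
    and w2: "\<And>\<beta>. \<exists>j<k2. \<beta> j \<noteq> 0 \<Longrightarrow> d2 \<le> wt N (S2 \<beta>)"
    and o12: "\<And>\<alpha> \<beta>. herm_inner q N (S1 \<alpha>) (S2 \<beta>) = 0"
    and o21: "\<And>\<alpha> \<beta>. herm_inner q N (S2 \<beta>) (S1 \<alpha>) = 0"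
    and mu1: "\<mu> \<noteq> 1"
    and mu2: "\<mu>^(q+1) = 1 \<or> (\<forall>\<beta> \<beta>'. herm_inner q N (S2 \<beta>) (S2 \<beta>') = 0)"
    and dd1: "d \<le> 2*d1" and dd2: "d \<le> d2"
    and ex: "(\<exists>\<alpha>. (\<exists>j<k1. \<alpha> j \<noteq> 0) \<and> 2 * wt N (S1 \<alpha>) = d) \<or>
             (\<mu> = 0 \<and> (\<exists>\<beta>. (\<exists>j<k2. \<beta> j \<noteq> 0) \<and> wt N (S2 \<beta>) = d))"
    and n: "2*N \<le> n" and c2: "(2::'a) = 0" and q: "q = 2^r"
  shows "\<exists>C::(nat \<Rightarrow> 'a) set. linear_code n (k1+k2) d C \<and> herm_self_orth q n C"
proof -
  define k where "k = k1 + k2"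
  define b where "b i = (if i < k1 then prodc \<mu> N (B1 i) 0 else prodc \<mu> N 0 (B2 (i - k1)))" for i
  define comb where "comb \<gamma> = (\<Sum>i<k. scaleF (\<gamma> i) (b i))" for \<gamma>
  have S1p: "S1 \<alpha> x = (\<Sum>j<k1. \<alpha> j * B1 j x)" for \<alpha> x
    by (simp add: S1def sum_fun_apply scaleF_def)
  have S2p: "S2 \<beta> x = (\<Sum>j<k2. \<beta> j * B2 j x)" for \<beta> x
    by (simp add: S2def sum_fun_apply scaleF_def)
  have S1v: "S1 \<alpha> \<in> vecs N" for \<alpha> unfolding S1def by (rule sum_vecs[OF B1v])
  have S2v: "S2 \<beta> \<in> vecs N" for \<beta> unfolding S2def by (rule sum_vecs[OF B2v])
  have combp: "comb \<gamma> x = (\<Sum>i<k. \<gamma> i * b i x)" for \<gamma> x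
    by (simp add: comb_def sum_fun_apply scaleF_def)
  have combeq: "comb \<gamma> = prodc \<mu> N (S1 \<gamma>) (S2 (\<lambda>j. \<gamma> (k1 + j)))" for \<gamma>
  proof
    fix x
    have "comb \<gamma> x = (\<Sum>i<k1. \<gamma> i * b i x) + (\<Sum>j<k2. \<gamma> (k1 + j) * b (k1 + j) x)"
      unfolding combp k_def by (rule sum_split_add)
    also have "\<dots> = (\<Sum>i<k1. \<gamma> i * prodc \<mu> N (B1 i) 0 x) + (\<Sum>j<k2. \<gamma> (k1 + j) * prodc \<mu> N 0 (B2 j) x)"
      by (simp add: b_def)
    also have "\<dots> = prodc \<mu> N (S1 \<gamma>) (S2 (\<lambda>j. \<gamma> (k1 + j))) x"
      by (simp add: prodc_def S1p S2p sum_distrib_left algebra_simps)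
    finally show "comb \<gamma> x = prodc \<mu> N (S1 \<gamma>) (S2 (\<lambda>j. \<gamma> (k1 + j))) x" .
  qed
  have S1z: "S1 (\<lambda>j. 0) = 0" by (simp add: fun_eq_iff S1p)
  have S2z: "S2 (\<lambda>j. 0) = 0" by (simp add: fun_eq_iff S2p)
  have S1nz: "S1 \<alpha> \<noteq> 0 \<Longrightarrow> \<exists>j<k1. \<alpha> j \<noteq> 0" for \<alpha>
  proof (rule ccontr)
    assume a: "S1 \<alpha> \<noteq> 0" "\<not> (\<exists>j<k1. \<alpha> j \<noteq> 0)"
    hence "S1 \<alpha> = S1 (\<lambda>j. 0)" unfolding S1def by (intro sum.cong) auto
    thus False using a S1z by simp
  qed
  have S2nz: "S2 \<beta> \<noteq> 0 \<Longrightarrow> \<exists>j<k2. \<beta> j \<noteq> 0" for \<beta>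
  proof (rule ccontr)
    assume a: "S2 \<beta> \<noteq> 0" "\<not> (\<exists>j<k2. \<beta> j \<noteq> 0)"
    hence "S2 \<beta> = S2 (\<lambda>j. 0)" unfolding S2def by (intro sum.cong) auto
    thus False using a S2z by simp
  qed
  have prodc_zero: "prodc \<mu> N u v = 0 \<Longrightarrow> u \<in> vecs N \<Longrightarrow> v \<in> vecs N \<Longrightarrow> u = 0 \<and> v = 0" for u v
  proof -
    assume z: "prodc \<mu> N u v = 0" and uv: "u \<in> vecs N" "v \<in> vecs N"
    have "u x = 0 \<and> v x = 0" for x
    proof (cases "x < N")
      case True
      have e1: "u x + v x = 0" using fun_cong[OF z, of x] True by (simp add: prodc_def)
      have e2: "u x + \<mu> * v x = 0" using fun_cong[OF z, of "N + x"] True by (simp add: prodc_def)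
      have "(\<mu> - 1) * v x = (u x + \<mu> * v x) - (u x + v x)" by (simp add: algebra_simps)
      hence "(\<mu> - 1) * v x = 0" using e1 e2 by simp
      hence "v x = 0" using mu1 by simp
      thus ?thesis using e1 by simp
    next
      case False
      then show ?thesis using uv by (simp add: vecs_def)
    qed
    thus ?thesis by (auto simp: fun_eq_iff)
  qed
  have indc: "\<forall>i<k. \<gamma> i = 0" if z: "comb \<gamma> = 0" for \<gamma>
  proof -
    have "S1 \<gamma> = 0 \<and> S2 (\<lambda>j. \<gamma> (k1 + j)) = 0"
      using prodc_zero[OF z[unfolded combeq] S1v S2v] .
    hence "\<forall>j<k1. \<gamma> j = 0" "\<forall>j<k2. \<gamma> (k1 + j) = 0" using ind1 ind2 by blast+
    thus ?thesis unfolding k_def by (metis add_diff_inverse_nat nat_add_left_cancel_less)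
  qed
  have inj: "inj_on b {..<k}"
    by (rule indep_inj) (use indc comb_def in auto)
  have indep: "\<not> fvs.dependent (b ` {..<k})"
  proof
    assume "fvs.dependent (b ` {..<k})"
    then obtain u where u: "\<exists>v\<in>b ` {..<k}. u v \<noteq> 0" "(\<Sum>v\<in>b ` {..<k}. scaleF (u v) v) = 0"
      using fvs.dependent_finite[of "b ` {..<k}"] by auto
    have "(\<Sum>v\<in>b ` {..<k}. scaleF (u v) v) = comb (\<lambda>i. u (b i))"
      unfolding comb_def by (subst sum.reindex[OF inj]) simp
    hence "\<forall>i<k. u (b i) = 0" using u(2) indc by simp
    thus False using u(1) by auto
  qed
  define C where "C = fvs.span (b ` {..<k})"
  have Ceq: "C = range comb"
  proof -
    have "C = range (\<lambda>u. \<Sum>v\<in>b ` {..<k}. scaleF (u v) v)"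
      unfolding C_def by (rule fvs.span_finite) simp
    also have "\<dots> = range (\<lambda>u. comb (\<lambda>i. u (b i)))"
      unfolding comb_def by (simp add: sum.reindex[OF inj])
    also have "\<dots> = range comb"
    proof
      show "range (\<lambda>u. comb (\<lambda>i. u (b i))) \<subseteq> range comb" by auto
      show "range comb \<subseteq> range (\<lambda>u. comb (\<lambda>i. u (b i)))"
      proof
        fix c assume "c \<in> range comb"
        then obtain \<gamma> where c: "c = comb \<gamma>" by auto
        have "comb \<gamma> = comb (\<lambda>i. (\<gamma> \<circ> inv_into {..<k} b) (b i))"
          unfolding comb_def by (rule sum.cong) (use inj in auto)
        thus "c \<in> range (\<lambda>u. comb (\<lambda>i. u (b i)))" using c by blast
      qed
    qed
    finally show ?thesis .
  qed
  have dimC: "fvs.dim C = k"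
    unfolding C_def using fvs.dim_span_eq_card_independent[OF indep] card_image[OF inj] by simp
  have subC: "fvs.subspace C" unfolding C_def by (rule fvs.subspace_span)
  have Cvec: "C \<subseteq> vecs n"
    using n by (auto simp: Ceq combeq vecs_def prodc_def)
  have combdiff: "comb \<gamma> - comb \<gamma>' = comb (\<lambda>i. \<gamma> i - \<gamma>' i)" for \<gamma> \<gamma>'
    by (simp add: fun_eq_iff combp sum_subtractf left_diff_distrib)
  have W: "wt n (comb \<delta>) = wt N (\<lambda>i. S1 \<delta> i + S2 (\<lambda>j. \<delta> (k1 + j)) i) +
              wt N (\<lambda>i. S1 \<delta> i + \<mu> * S2 (\<lambda>j. \<delta> (k1 + j)) i)" for \<delta>
    unfolding combeq by (rule wt_prodc[OF n])
  have lowb: "d \<le> wt n (comb \<delta>)" if nz: "comb \<delta> \<noteq> 0" for \<delta>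
  proof -
    let ?u = "S1 \<delta>" and ?v = "S2 (\<lambda>j. \<delta> (k1 + j))"
    show ?thesis
    proof (cases "?v = 0")
      case True
      have "?u \<noteq> 0"
      proof
        assume "?u = 0"
        hence "comb \<delta> = 0" unfolding combeq using True by (simp add: prodc_def fun_eq_iff)
        thus False using nz by simp
      qed
      hence "d1 \<le> wt N ?u" using w1[OF S1nz] by simp
      moreover have "wt n (comb \<delta>) = wt N ?u + wt N ?u" using W[of \<delta>] True by simp
      ultimately show ?thesis using dd1 by simp
    next
      case False
      hence v: "d2 \<le> wt N ?v" using w2[OF S2nz] by simp
      have "(\<lambda>i. ?u i + \<mu> * ?v i) - (\<lambda>i. ?u i + ?v i) = (\<lambda>i. (\<mu> - 1) * ?v i)"
        by (simp add: fun_eq_iff algebra_simps)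
      moreover have "wt N ((\<lambda>i. ?u i + \<mu> * ?v i) - (\<lambda>i. ?u i + ?v i)) \<le> wt N (\<lambda>i. ?u i + \<mu> * ?v i) + wt N (\<lambda>i. ?u i + ?v i)"
        by (rule wt_diff_le)
      ultimately have "wt N (\<lambda>i. (\<mu> - 1) * ?v i) \<le> wt N (\<lambda>i. ?u i + \<mu> * ?v i) + wt N (\<lambda>i. ?u i + ?v i)"
        by simp
      moreover have "wt N (\<lambda>i. (\<mu> - 1) * ?v i) = wt N ?v" using mu1 by (simp add: wt_def)
      ultimately show ?thesis using W[of \<delta>] v dd2 by simp
    qed
  qed
  have witness: "\<exists>c\<in>C. c \<noteq> 0 \<and> wt n c = d"
    using ex
  proof
    assume "\<exists>\<alpha>. (\<exists>j<k1. \<alpha> j \<noteq> 0) \<and> 2 * wt N (S1 \<alpha>) = d"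
    then obtain \<alpha> where a: "\<exists>j<k1. \<alpha> j \<noteq> 0" "2 * wt N (S1 \<alpha>) = d" by blast
    define \<gamma> where "\<gamma> i = (if i < k1 then \<alpha> i else 0)" for i
    have e1: "S1 \<gamma> = S1 \<alpha>" unfolding S1def by (rule sum.cong) (auto simp: \<gamma>_def)
    have e2: "S2 (\<lambda>j. \<gamma> (k1 + j)) = 0" using S2z by (simp add: \<gamma>_def)
    have u0: "S1 \<alpha> \<noteq> 0" using ind1[of \<alpha>] a(1) by auto
    have "comb \<gamma> \<noteq> 0"
    proof
      assume "comb \<gamma> = 0"
      hence "prodc \<mu> N (S1 \<gamma>) (S2 (\<lambda>j. \<gamma> (k1 + j))) = 0" by (simp add: combeq[symmetric])
      hence "S1 \<gamma> = 0" using prodc_zero[OF _ S1v S2v] by blast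
      thus False using u0 e1 by simp
    qed
    moreover have "wt n (comb \<gamma>) = d" using W[of \<gamma>] e1 e2 a(2) by simp
    ultimately show ?thesis using Ceq by blast
  next
    assume "\<mu> = 0 \<and> (\<exists>\<beta>. (\<exists>j<k2. \<beta> j \<noteq> 0) \<and> wt N (S2 \<beta>) = d)"
    then obtain \<beta> where m0: "\<mu> = 0" and a: "\<exists>j<k2. \<beta> j \<noteq> 0" "wt N (S2 \<beta>) = d" by blast
    define \<gamma> where "\<gamma> i = (if i < k1 then 0 else \<beta> (i - k1))" for i
    have e1: "S1 \<gamma> = 0" using S1z unfolding S1def by (simp add: \<gamma>_def)
    have e2: "S2 (\<lambda>j. \<gamma> (k1 + j)) = S2 \<beta>" by (simp add: \<gamma>_def)
    have v0: "S2 \<beta> \<noteq> 0" using ind2[of \<beta>] a(1) by auto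
    have "comb \<gamma> \<noteq> 0"
    proof
      assume "comb \<gamma> = 0"
      hence "prodc \<mu> N (S1 \<gamma>) (S2 (\<lambda>j. \<gamma> (k1 + j))) = 0" by (simp add: combeq[symmetric])
      hence "S2 (\<lambda>j. \<gamma> (k1 + j)) = 0" using prodc_zero[OF _ S1v S2v] by blast
      thus False using v0 e2 by simp
    qed
    moreover have "wt n (comb \<gamma>) = d" using W[of \<gamma>] e1 e2 a(2) m0 by (simp add: wt_def)
    ultimately show ?thesis using Ceq by blast
  qed
  have md: "min_dist n C = d"
  proof -
    let ?D = "{hamming_dist n x y | x y. x \<in> C \<and> y \<in> C \<and> x \<noteq> y}"
    have lb: "d \<le> m" if mD: "m \<in> ?D" for m
    proof -
      obtain x y where xy: "m = hamming_dist n x y" "x \<in> C" "y \<in> C" "x \<noteq> y" using mD by blast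
      obtain \<gamma> \<gamma>' where g: "x = comb \<gamma>" "y = comb \<gamma>'" using xy Ceq by blast
      have "x - y = comb (\<lambda>i. \<gamma> i - \<gamma>' i)" using g combdiff by simp
      moreover have "x - y \<noteq> 0" using xy by simp
      ultimately have "d \<le> wt n (x - y)" using lowb by simp
      thus ?thesis using xy(1) hamming_wt[of n x y] by simp
    qed
    have fin: "finite ?D"
    proof (rule finite_subset[of _ "{..n}"])
      have "hamming_dist n x y \<le> n" for x y :: "nat \<Rightarrow> 'a"
        unfolding hamming_dist_def using card_mono[of "{0..<n}" "{i\<in>{0..<n}. x i \<noteq> y i}"] by fastforce
      thus "?D \<subseteq> {..n}" by auto
    qed simp
    obtain c where c: "c \<in> C" "c \<noteq> 0" "wt n c = d" using witness by blast
    have z: "0 \<in> C" using subC fvs.subspace_0 by blast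
    have "d \<in> ?D" using c z hamming_wt[of n c 0] by force
    show ?thesis unfolding min_dist_def by (rule Min_eqI[OF fin]) (use lb \<open>d \<in> ?D\<close> in auto)
  qed
  have ho: "herm_self_orth q n C"
    unfolding herm_self_orth_def
  proof (intro ballI)
    fix x y assume "x \<in> C" "y \<in> C"
    then obtain \<gamma> \<gamma>' where g: "x = comb \<gamma>" "y = comb \<gamma>'" using Ceq by blast
    have last: "(1 + \<mu>^(q+1)) * herm_inner q N (S2 (\<lambda>j. \<gamma> (k1 + j))) (S2 (\<lambda>j. \<gamma>' (k1 + j))) = 0"
      using mu2 c2 by auto
    show "herm_inner q n x y = 0"
      unfolding g combeq herm_prodc[OF n c2 q] using o12 o21 last by simp
  qed
  have "linear_code n k d C"
    unfolding linear_code_def using Cvec subC dimC md by simp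
  thus ?thesis using ho k_def by blast
qed


lemma coeff_mult_bound:
  fixes p q :: "'a::field poly"
  assumes "degree p \<le> a" "degree q \<le> b"
  shows "coeff (p * q) (a + b) = coeff p a * coeff q b"
proof (cases "degree p = a \<and> degree q = b")
  case True then show ?thesis using coeff_mult_degree_sum[of p q] by simp
next
  case False
  hence "degree p < a \<or> degree q < b" using assms by auto
  hence "coeff p a * coeff q b = 0" by (auto simp: coeff_eq_0)
  moreover have "coeff (p*q) (a+b) = 0"
    using False assms degree_mult_le[of p q] by (intro coeff_eq_0) linarith
  ultimately show ?thesis by simp
qed

lemma herm_swap:
  assumes c2: "(2::'a::field) = 0" and q: "q = 2^r" and fx: "\<And>x::'a. x ^ (q*q) = x"
  shows "herm_inner q N y x = (herm_inner q N x (y :: nat \<Rightarrow> 'a)) ^ q"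
proof -
  have "(herm_inner q N x y)^q = (\<Sum>i<N. (x i * y i ^ q)^q)"
    unfolding herm_inner_def q by (rule frob_sum[OF c2])
  also have "\<dots> = (\<Sum>i<N. y i * x i ^ q)"
  proof (rule sum.cong[OF refl])
    fix i
    have "(y i ^ q) ^ q = y i" using fx[of "y i"] by (simp add: power_mult[symmetric])
    thus "(x i * y i ^ q) ^ q = y i * x i ^ q" by (simp add: power_mult_distrib mult.commute)
  qed
  finally show ?thesis by (simp add: herm_inner_def)
qed

lemma frob_polyOf:
  assumes c2: "(2::'a::field) = 0" and q: "q = 2^r" and fx: "\<And>x::'a. x ^ (q*q) = x"
  shows "(poly (polyOf k \<beta>) ((a::'a) ^ q)) ^ q = poly (polyOf k (\<lambda>j. \<beta> j ^ q)) a"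
proof -
  have "(poly (polyOf k \<beta>) (a ^ q)) ^ q = (\<Sum>j<k. (\<beta> j * (a ^ q) ^ j) ^ q)"
    unfolding poly_polyOf q by (rule frob_sum[OF c2])
  also have "\<dots> = (\<Sum>j<k. \<beta> j ^ q * a ^ j)"
  proof (rule sum.cong[OF refl])
    fix j
    have "((a ^ q) ^ j) ^ q = (a ^ (q * q)) ^ j"
      by (simp add: power_mult[symmetric] mult.commute mult.left_commute)
    thus "(\<beta> j * (a ^ q) ^ j) ^ q = \<beta> j ^ q * a ^ j" using fx[of a] by (simp add: power_mult_distrib)
  qed
  finally show ?thesis by (simp add: poly_polyOf)
qed

lemma large_orth:
  fixes P :: "'a::field poly" and xs :: "'a list"
  assumes cU: "card (UNIV::'a set) = q*q" and q: "q = 2^r" and r: "r > 0"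
    and c2: "(2::'a) = 0"
    and xs: "distinct xs" "set xs = UNIV"
    and P: "coeff P m = 1" "degree P = m"
    and k: "m + k1 + k2 = q*q + 1" "k1 \<ge> 1" "k2 \<ge> 1"
  shows "herm_inner q (q*q+1) (evC (q*q) (nth xs) (\<lambda>i. poly P (xs!i)) True k1 \<alpha>)
            (evC (q*q) (\<lambda>i. (xs!i)^q) (\<lambda>i. 1) True k2 \<beta>) = 0"
proof -
  let ?Q = "q*q"
  have "(2::nat)^1 \<le> 2^r" using r by (intro power_increasing) auto
  hence q2: "q \<ge> 2" using q by simp
  have "2 * 1 \<le> q * q" using q2 by (intro mult_le_mono) auto
  hence Q2: "?Q \<ge> 2" by simp
  have fin: "finite (UNIV::'a set)" using cU Q2 card.infinite by force
  have fx: "\<And>x::'a. x ^ (q*q) = x" using fermat_field2[OF fin] cU by simp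
  have len: "length xs = ?Q" using distinct_card[OF xs(1)] xs(2) cU by simp
  let ?G = "polyOf k1 \<alpha>" and ?H = "polyOf k2 (\<lambda>j. \<beta> j ^ q)"
  let ?u = "evC ?Q (nth xs) (\<lambda>i. poly P (xs!i)) True k1 \<alpha>"
  let ?v = "evC ?Q (\<lambda>i. (xs!i)^q) (\<lambda>i. 1) True k2 \<beta>"
  have "herm_inner q (?Q+1) ?u ?v = (\<Sum>i<?Q. ?u i * ?v i ^ q) + ?u ?Q * ?v ?Q ^ q"
    by (simp add: herm_inner_def)
  also have "(\<Sum>i<?Q. ?u i * ?v i ^ q) = (\<Sum>i<?Q. poly (P * ?G * ?H) (xs!i))"
    by (rule sum.cong[OF refl]) (simp add: evC_def frob_polyOf[OF c2 q fx])
  also have "\<dots> = (\<Sum>a\<in>UNIV. poly (P * ?G * ?H) a)"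
    by (rule sum.reindex_bij_betw[OF bij_betw_nth[OF xs(1)]]) (simp_all add: len xs(2))
  also have "\<dots> = coeff (P * ?G * ?H) (?Q - 1)"
  proof -
    have dG: "degree ?G \<le> k1 - 1" by (rule degree_polyOf[OF k(2)])
    have dH: "degree ?H \<le> k2 - 1" by (rule degree_polyOf[OF k(3)])
    have "degree (P * ?G * ?H) \<le> degree P + degree ?G + degree ?H"
      using degree_mult_le[of "P * ?G" ?H] degree_mult_le[of P ?G] by simp
    hence "degree (P * ?G * ?H) < card (UNIV::'a set)" using dG dH P k cU by simp
    thus ?thesis using sum_poly_over[OF fin _ _ _ c2 of_nat_card_UNIV[OF fin], of "P * ?G * ?H"]
        fermat_field2[OF fin] Q2 cU by simp
  qed
  also have "\<dots> = coeff P m * coeff ?G (k1 - 1) * coeff ?H (k2 - 1)"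
  proof -
    have dG: "degree ?G \<le> k1 - 1" by (rule degree_polyOf[OF k(2)])
    have dH: "degree ?H \<le> k2 - 1" by (rule degree_polyOf[OF k(3)])
    have dPG: "degree (P * ?G) \<le> m + (k1 - 1)" using degree_mult_le[of P ?G] dG P by simp
    have e: "?Q - 1 = (m + (k1 - 1)) + (k2 - 1)" using k by simp
    have c1: "coeff (P * ?G) (m + (k1 - 1)) = coeff P m * coeff ?G (k1 - 1)"
      using coeff_mult_bound[of P m ?G "k1 - 1"] P(2) dG by simp
    show ?thesis unfolding e coeff_mult_bound[OF dPG dH] c1 ..
  qed
  also have "\<dots> = \<alpha> (k1 - 1) * \<beta> (k2 - 1) ^ q" using P k by (simp add: coeff_polyOf)
  finally have "herm_inner q (?Q+1) ?u ?v = \<alpha> (k1 - 1) * \<beta> (k2 - 1) ^ q + ?u ?Q * ?v ?Q ^ q" .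
  also have "?u ?Q * ?v ?Q ^ q = \<alpha> (k1 - 1) * \<beta> (k2 - 1) ^ q" by (simp add: evC_def)
  finally show ?thesis by (simp add: mult_2[symmetric] c2)
qed

lemma exists_unit_circle:
  assumes cU: "card (UNIV::'a::field set) = q*q" and q2: "q \<ge> 2"
  shows "\<exists>l::'a. l^(q+1) = 1 \<and> l \<noteq> 1"
proof -
  have fin: "finite (UNIV::'a set)" using cU q2 card.infinite by force
  have r: "finite {y::'a. y^(q-1) = 1} \<and> card {y::'a. y^(q-1) = 1} \<le> q - 1"
    by (rule roots_pow_eq) (use q2 in simp)
  have cA: "card (UNIV - {0::'a}) = q*q - 1" using fin cU by (simp add: card_Diff_singleton)
  have "q * 1 < q * q" using q2 by (intro mult_less_mono2) auto
  hence "q - 1 < q*q - 1" using q2 by linarith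
  have "\<not> (UNIV - {0::'a} \<subseteq> {y::'a. y^(q-1) = 1})"
  proof
    assume "UNIV - {0::'a} \<subseteq> {y::'a. y^(q-1) = 1}"
    hence "card (UNIV - {0::'a}) \<le> card {y::'a. y^(q-1) = 1}" by (rule card_mono[OF conjunct1[OF r]])
    thus False using conjunct2[OF r] cA \<open>q - 1 < q*q - 1\<close> by linarith
  qed
  then obtain y :: 'a where y: "y \<noteq> 0" "y^(q-1) \<noteq> 1" by auto
  have e: "(q-1)*(q+1) = q*q - 1" using q2 by (cases q) (simp_all add: algebra_simps)
  have "(y^(q-1))^(q+1) = y^(q*q - 1)"
    by (simp only: power_mult[symmetric] e)
  also have "\<dots> = 1" using fermat_field[OF fin y(1)] cU by simp
  finally show ?thesis using y(2) by blast
qed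

lemma rootless_quadratic:
  assumes fin: "finite (UNIV::'a::field set)" and c2: "(2::'a) = 0"
  shows "\<exists>R::'a poly. degree R = 2 \<and> coeff R 2 = 1 \<and> (\<forall>x. poly R x \<noteq> 0)"
proof -
  have "\<not> inj (\<lambda>x::'a. x^2 + x)"
  proof
    assume "inj (\<lambda>x::'a. x^2 + x)"
    moreover have "(0::'a)^2 + 0 = 1^2 + 1" using c2 by simp
    ultimately have "(0::'a) = 1" by (rule injD)
    thus False by simp
  qed
  hence "\<not> surj (\<lambda>x::'a. x^2 + x)" using finite_UNIV_surj_inj[OF fin] by blast
  then obtain c where "c \<notin> range (\<lambda>x::'a. x^2 + x)" by auto
  hence c: "\<forall>x::'a. x^2 + x \<noteq> c" by auto
  define R where "R = [:c, 1, 1::'a:]"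
  have "poly R x \<noteq> 0" for x
  proof
    assume "poly R x = 0"
    moreover have "poly R x = c + (x^2 + x)" by (simp add: R_def power2_eq_square distrib_left)
    ultimately have "c + (x^2 + x) = 0" by simp
    hence "x^2 + x = - c" by (simp only: add_eq_0_iff)
    thus False using c char2_neg[OF c2, of c] by simp
  qed
  moreover have "degree R = 2" "coeff R 2 = 1" by (simp_all add: R_def numeral_2_eq_2)
  ultimately show ?thesis by blast
qed

lemma poly_xR:
  fixes R :: "'a::field poly"
  assumes R: "degree R = 2" "coeff R 2 = 1" "\<forall>x. poly R x \<noteq> 0" and e: "e \<le> 1"
  shows "coeff (monom 1 e * R^t) (e + 2*t) = 1 \<and> degree (monom 1 e * R^t) = e + 2*t
     \<and> card {x. poly (monom 1 e * R^t) x = 0} = e"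
proof -
  have R0: "R \<noteq> 0" using R by auto
  have Rt: "R^t \<noteq> 0" using R0 by simp
  have d: "degree (monom 1 e * R^t) = e + 2*t"
    using R0 Rt by (simp add: degree_mult_eq degree_monom_eq degree_power_eq R(1))
  have l: "coeff (monom 1 e * R^t) (e + 2*t) = 1"
    using lead_coeff_mult[of "monom (1::'a) e" "R^t"] d lead_coeff_power[of R t] R
    by (simp add: degree_monom_eq)
  have "{x. poly (monom 1 e * R^t) x = 0} = (if e = 0 then {} else {0})"
    using R(3) e by (auto simp: poly_monom)
  hence "card {x. poly (monom 1 e * R^t) x = 0} = e" using e by auto
  thus ?thesis using d l by simp
qed

lemma large_code:
  fixes P :: "'a::field poly"
  assumes cU: "card (UNIV::'a set) = q*q" and q: "q = 2^r" and r: "r > 0"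
    and P: "coeff P m = 1" "degree P = m" "card {x. poly P x = 0} = e"
    and k: "m + k1 + k2 = q*q + 1" "k1 \<ge> 1" "k2 \<ge> 1" "k1 + e \<le> q*q"
    and dd: "d = 2 * (q*q - e + 2 - k1)" "d \<le> q*q + 2 - k2"
    and n: "n = 2*(q*q+1)"
  shows "\<exists>C::(nat \<Rightarrow> 'a) set. linear_code n (k1+k2) d C \<and> herm_self_orth q n C"
proof -
  let ?Q = "q*q"
  have "(2::nat)^1 \<le> 2^r" using r by (intro power_increasing) auto
  hence q2: "q \<ge> 2" using q by simp
  have "2 * 1 \<le> q * q" using q2 by (intro mult_le_mono) auto
  hence Q2: "?Q \<ge> 2" by simp
  have fin: "finite (UNIV::'a set)" using cU Q2 card.infinite by force
  have c2: "(2::'a) = 0"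
  proof -
    have "card (UNIV::'a set) = 2^(r+r)" using cU q by (simp add: power_add)
    thus ?thesis by (rule char2_of_card) (use r in simp)
  qed
  have fx: "\<And>x::'a. x ^ (q*q) = x" using fermat_field2[OF fin] cU by simp
  obtain xs :: "'a list" where xs: "distinct xs" "set xs = UNIV"
    using finite_distinct_list[OF fin] by auto
  have len: "length xs = ?Q" using distinct_card[OF xs(1)] xs(2) cU by simp
  obtain l :: 'a where l: "l^(q+1) = 1" "l \<noteq> 1" using exists_unit_circle[OF cU q2] by blast
  let ?p1 = "nth xs" and ?z1 = "\<lambda>i. poly P (xs!i)"
  let ?p2 = "\<lambda>i. (xs!i)^q" and ?z2 = "\<lambda>i::nat. (1::'a)"
  have inj1: "inj_on ?p1 {..<?Q}" using xs(1) len by (intro inj_on_nth) auto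
  have inj2: "inj_on ?p2 {..<?Q}"
  proof (rule inj_onI)
    fix i j assume ij: "i \<in> {..<?Q}" "j \<in> {..<?Q}" "(xs!i)^q = (xs!j)^q"
    hence "((xs!i)^q)^q = ((xs!j)^q)^q" by simp
    hence "xs!i = xs!j" using fx by (simp add: power_mult[symmetric])
    thus "i = j" using ij xs(1) len nth_eq_iff_index_eq[of xs i j] by auto
  qed
  have Z1: "card {i. i < ?Q \<and> ?z1 i \<noteq> 0} = ?Q - e"
  proof -
    have "card {i. i < ?Q \<and> ?z1 i \<noteq> 0} = card (?p1 ` {i. i < ?Q \<and> ?z1 i \<noteq> 0})"
      by (rule card_image[symmetric]) (rule inj_on_subset[OF inj1], auto)
    also have "?p1 ` {i. i < ?Q \<and> ?z1 i \<noteq> 0} = {x. poly P x \<noteq> 0}"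
    proof
      show "?p1 ` {i. i < ?Q \<and> ?z1 i \<noteq> 0} \<subseteq> {x. poly P x \<noteq> 0}" by auto
      show "{x. poly P x \<noteq> 0} \<subseteq> ?p1 ` {i. i < ?Q \<and> ?z1 i \<noteq> 0}"
      proof
        fix x assume x: "x \<in> {x. poly P x \<noteq> 0}"
        have "x \<in> set xs" using xs(2) by simp
        then obtain i where "i < length xs" "xs!i = x" by (auto simp: in_set_conv_nth)
        thus "x \<in> ?p1 ` {i. i < ?Q \<and> ?z1 i \<noteq> 0}" using x len by auto
      qed
    qed
    also have "{x. poly P x \<noteq> 0} = UNIV - {x. poly P x = 0}" by auto
    also have "card \<dots> = ?Q - e" using P(3) cU fin by (subst card_Diff_subset) (auto intro: finite_subset)
    finally show ?thesis .
  qed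
  have Z2: "card {i. i < ?Q \<and> ?z2 i \<noteq> 0} = ?Q" by simp
  have NN: "?Q + (if True then 1 else 0) = ?Q + 1" by simp
  show ?thesis
  proof (rule product_code[where ?B1.0 = "evB ?Q ?p1 ?z1 True k1" and ?B2.0 = "evB ?Q ?p2 ?z2 True k2"
        and ?S1.0 = "evC ?Q ?p1 ?z1 True k1" and ?S2.0 = "evC ?Q ?p2 ?z2 True k2"
        and N = "?Q + 1" and \<mu> = l and ?d1.0 = "?Q - e + 2 - k1" and ?d2.0 = "?Q + 2 - k2" and r = r])
    show "\<And>\<alpha>. evC ?Q ?p1 ?z1 True k1 \<alpha> = (\<Sum>j<k1. scaleF (\<alpha> j) (evB ?Q ?p1 ?z1 True k1 j))"
      by (rule evC_sum[OF k(2), symmetric])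
    show "\<And>\<beta>. evC ?Q ?p2 ?z2 True k2 \<beta> = (\<Sum>j<k2. scaleF (\<beta> j) (evB ?Q ?p2 ?z2 True k2 j))"
      by (rule evC_sum[OF k(3), symmetric])
    show "\<And>j. evB ?Q ?p1 ?z1 True k1 j \<in> vecs (?Q + 1)" using evB_vecs[where fl=True] by simp
    show "\<And>j. evB ?Q ?p2 ?z2 True k2 j \<in> vecs (?Q + 1)" using evB_vecs[where fl=True] by simp
    show "\<And>\<alpha>. evC ?Q ?p1 ?z1 True k1 \<alpha> = 0 \<Longrightarrow> \<forall>j<k1. \<alpha> j = 0"
      by (rule evC_indep[OF inj1]) (use Z1 k in simp_all)
    show "\<And>\<beta>. evC ?Q ?p2 ?z2 True k2 \<beta> = 0 \<Longrightarrow> \<forall>j<k2. \<beta> j = 0"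
      by (rule evC_indep[OF inj2]) (use Z2 k in simp_all)
    show "?Q - e + 2 - k1 \<le> wt (?Q + 1) (evC ?Q ?p1 ?z1 True k1 \<alpha>)" if a: "\<exists>j<k1. \<alpha> j \<noteq> 0" for \<alpha>
    proof -
      have "card {i. i < ?Q \<and> ?z1 i \<noteq> 0} + 1 - k1 + (if True then 1 else 0) \<le> wt (?Q + (if True then 1 else 0)) (evC ?Q ?p1 ?z1 True k1 \<alpha>)"
        by (rule evC_weight[OF inj1 _ k(2) a]) (use Z1 k in simp)
      thus ?thesis unfolding Z1 using k by simp
    qed
    show "?Q + 2 - k2 \<le> wt (?Q + 1) (evC ?Q ?p2 ?z2 True k2 \<beta>)" if a: "\<exists>j<k2. \<beta> j \<noteq> 0" for \<beta>
    proof -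
      have "card {i. i < ?Q \<and> ?z2 i \<noteq> 0} + 1 - k2 + (if True then 1 else 0) \<le> wt (?Q + (if True then 1 else 0)) (evC ?Q ?p2 ?z2 True k2 \<beta>)"
        by (rule evC_weight[OF inj2 _ k(3) a]) (use Z2 k in simp)
      thus ?thesis unfolding Z2 using k by simp
    qed
    show o12: "\<And>\<alpha> \<beta>. herm_inner q (?Q + 1) (evC ?Q ?p1 ?z1 True k1 \<alpha>) (evC ?Q ?p2 ?z2 True k2 \<beta>) = 0"
      by (rule large_orth[OF cU q r c2 xs P(1,2) k(1,2,3)])
    show "herm_inner q (?Q + 1) (evC ?Q ?p2 ?z2 True k2 \<beta>) (evC ?Q ?p1 ?z1 True k1 \<alpha>) = 0" for \<alpha> \<beta>
    proof -
      have "herm_inner q (?Q + 1) (evC ?Q ?p2 ?z2 True k2 \<beta>) (evC ?Q ?p1 ?z1 True k1 \<alpha>) =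
            (herm_inner q (?Q + 1) (evC ?Q ?p1 ?z1 True k1 \<alpha>) (evC ?Q ?p2 ?z2 True k2 \<beta>)) ^ q"
        by (rule herm_swap[OF c2 q fx])
      also have "\<dots> = 0" unfolding o12 using q2 by simp
      finally show ?thesis .
    qed
    show "l \<noteq> 1" by (rule l(2))
    show "l ^ (q + 1) = 1 \<or> (\<forall>\<beta> \<beta>'. herm_inner q (?Q + 1) (evC ?Q ?p2 ?z2 True k2 \<beta>) (evC ?Q ?p2 ?z2 True k2 \<beta>') = 0)"
      using l(1) by simp
    show "d \<le> 2 * (?Q - e + 2 - k1)" using dd by simp
    show "d \<le> ?Q + 2 - k2" by (rule dd(2))
    show "(\<exists>\<alpha>. (\<exists>j<k1. \<alpha> j \<noteq> 0) \<and> 2 * wt (?Q + 1) (evC ?Q ?p1 ?z1 True k1 \<alpha>) = d) \<or>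
      (l = 0 \<and> (\<exists>\<beta>. (\<exists>j<k2. \<beta> j \<noteq> 0) \<and> wt (?Q + 1) (evC ?Q ?p2 ?z2 True k2 \<beta>) = d))"
    proof -
      obtain \<alpha> where a: "\<alpha> (k1 - 1) = 1" "wt (?Q + 1) (evC ?Q ?p1 ?z1 True k1 \<alpha>) = ?Q - e + 1 - k1 + 1"
      proof -
        have "k1 \<le> card {i. i < ?Q \<and> ?z1 i \<noteq> 0}" using Z1 k by simp
        from evC_witness[OF inj1 this k(2), where fl=True] Z1 that show ?thesis by auto
      qed
      have "\<exists>j<k1. \<alpha> j \<noteq> 0" using a(1) k(2) by (intro exI[of _ "k1 - 1"]) auto
      moreover have "2 * wt (?Q + 1) (evC ?Q ?p1 ?z1 True k1 \<alpha>) = d" using a(2) dd k by simp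
      ultimately show ?thesis by blast
    qed
    show "2 * (?Q + 1) \<le> n" using n by simp
    show "(2::'a) = 0" by (rule c2)
    show "q = 2^r" by (rule q)
  qed
qed



lemma frob_polyOf2:
  assumes c2: "(2::'a::field) = 0" and q: "q = 2^r"
  shows "(poly (polyOf k \<beta>) (a::'a)) ^ q = poly (polyOf k (\<lambda>j. \<beta> j ^ q)) (a ^ q)"
proof -
  have "(poly (polyOf k \<beta>) a) ^ q = (\<Sum>j<k. (\<beta> j * a ^ j) ^ q)"
    unfolding poly_polyOf q by (rule frob_sum[OF c2])
  also have "\<dots> = (\<Sum>j<k. \<beta> j ^ q * (a ^ q) ^ j)"
    by (rule sum.cong[OF refl]) (simp add: power_mult_distrib power_mult[symmetric] mult.commute)
  finally show ?thesis by (simp add: poly_polyOf)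
qed

lemma small_code:
  assumes cU: "card (UNIV::'a::field set) = q*q" and q: "q = 2^r" and r: "r > 0"
    and t: "t \<le> q" and N: "N = q - t"
    and k: "k1 \<ge> 1" "k2 \<ge> 1" "k1 + k2 \<le> N"
    and so: "2*t + 2*k2 \<le> q \<or> (k2 = 1 \<and> t + 2 \<le> q)"
    and dd: "d \<le> 2*(N + 1 - k1)" "d \<le> N + 1 - k2" "2*(N + 1 - k1) = d \<or> N + 1 - k2 = d"
    and n: "n = 2*N"
  shows "\<exists>C::(nat \<Rightarrow> 'a) set. linear_code n (k1+k2) d C \<and> herm_self_orth q n C"
proof -
  let ?Q = "q*q"
  let ?F = "{x::'a. x ^ q = x}"
  have "(2::nat)^1 \<le> 2^r" using r by (intro power_increasing) auto
  hence q2: "q \<ge> 2" using q by simp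
  have "2 * 1 \<le> q * q" using q2 by (intro mult_le_mono) auto
  hence Q2: "?Q \<ge> 2" by simp
  have fin: "finite (UNIV::'a set)" using cU Q2 card.infinite by force
  have c2: "(2::'a) = 0"
  proof -
    have "card (UNIV::'a set) = 2^(r+r)" using cU q by (simp add: power_add)
    thus ?thesis by (rule char2_of_card) (use r in simp)
  qed
  have fx: "\<And>x::'a. x ^ (q*q) = x" using fermat_field2[OF fin] cU by simp
  have cF: "card ?F = q" by (rule card_subfield[OF cU q2])
  have finF: "finite ?F" by (rule finite_subset[OF _ fin]) auto
  have F0: "(0::'a) \<in> ?F" using q2 by simp
  have Fmult: "x * y \<in> ?F" if "x \<in> ?F" "y \<in> ?F" for x y using that by (simp add: power_mult_distrib)
  have Fsub: "x - y \<in> ?F" if "x \<in> ?F" "y \<in> ?F" for x y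
  proof -
    have m: "- y = y" by (rule char2_neg[OF c2])
    have e1: "x - y = x + y" by (subst m[symmetric]) simp
    have e2: "(x + y) ^ q = x ^ q + y ^ q" unfolding q by (rule frob_pow[OF c2])
    have "x ^ q = x" "y ^ q = y" using that by auto
    hence "(x - y) ^ q = x - y" unfolding e1 e2 by simp
    thus ?thesis by simp
  qed
  have ofq: "of_nat (card ?F) = (0::'a)" using cF q c2 r by (simp add: of_nat_power)
  have sumF: "(\<Sum>a\<in>?F. poly H a) = 0" if dH: "degree H + 2 \<le> q" for H :: "'a poly"
  proof -
    have "(\<Sum>a\<in>?F. poly H a) = coeff H (card ?F - 1)"
      by (rule sum_poly_over[OF finF F0 Fmult _ c2 ofq]) (use cF q2 dH in auto)
    also have "\<dots> = 0" using cF dH by (intro coeff_eq_0) simp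
    finally show ?thesis .
  qed
  obtain T where T: "T \<subseteq> ?F" "card T = t" "finite T"
    using obtain_subset_with_card_n[of t ?F] cF t by auto
  obtain ps :: "'a list" where ps: "distinct ps" "set ps = ?F - T"
    using finite_distinct_list[of "?F - T"] finF by auto
  have len: "length ps = N" using distinct_card[OF ps(1)] ps(2) card_Diff_subset[OF T(3) T(1)] cF T(2) N by simp
  define PT where "PT = (\<Prod>b\<in>T. [:- b, 1:])"
  have dPT: "degree PT = t" unfolding PT_def by (subst degree_prod_sum_eq) (auto simp: T)
  have PTroot: "poly PT a = 0 \<longleftrightarrow> a \<in> T" for a
    using T(3) by (simp add: PT_def poly_prod)
  have PTF: "poly PT a \<in> ?F" if "a \<in> ?F" for a
  proof -
    have "(poly PT a) ^ q = (\<Prod>b\<in>T. (a - b) ^ q)" by (simp add: PT_def poly_prod prod_power_distrib)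
    also have "\<dots> = (\<Prod>b\<in>T. a - b)" using Fsub that T(1) by (intro prod.cong) auto
    finally show ?thesis by (simp add: PT_def poly_prod)
  qed
  have psF: "ps ! i \<in> ?F - T" if "i < N" for i using ps(2) len that nth_mem by blast
  let ?p = "nth ps" and ?z1 = "\<lambda>i::nat. (1::'a)" and ?z2 = "\<lambda>i. poly PT (ps ! i)"
  have inj: "inj_on ?p {..<N}" using ps(1) len by (intro inj_on_nth) auto
  have Z1: "card {i. i < N \<and> ?z1 i \<noteq> 0} = N" by simp
  have Z2: "card {i. i < N \<and> ?z2 i \<noteq> 0} = N"
  proof -
    have "{i. i < N \<and> ?z2 i \<noteq> 0} = {..<N}" using psF PTroot by auto
    thus ?thesis by simp
  qed
  have sumps: "(\<Sum>i<N. poly H (ps ! i) * poly PT (ps ! i)) = (\<Sum>a\<in>?F. poly (H * PT) a)" for H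
  proof -
    have "(\<Sum>i<N. poly H (ps ! i) * poly PT (ps ! i)) = (\<Sum>i<N. poly (H * PT) (ps ! i))" by simp
    also have "\<dots> = (\<Sum>a\<in>?F - T. poly (H * PT) a)"
      by (rule sum.reindex_bij_betw[OF bij_betw_nth[OF ps(1)]]) (simp_all add: len ps(2))
    also have "\<dots> = (\<Sum>a\<in>?F. poly (H * PT) a)"
      by (rule sum.mono_neutral_left) (use finF PTroot in auto)
    finally show ?thesis .
  qed
  have o12: "herm_inner q N (evC N ?p ?z1 False k1 \<alpha>) (evC N ?p ?z2 False k2 \<beta>) = 0" for \<alpha> \<beta>
  proof -
    let ?G = "polyOf k1 \<alpha>" and ?H = "polyOf k2 (\<lambda>j. \<beta> j ^ q)"
    have "herm_inner q N (evC N ?p ?z1 False k1 \<alpha>) (evC N ?p ?z2 False k2 \<beta>) =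
          (\<Sum>i<N. poly (?G * ?H) (ps ! i) * poly PT (ps ! i))"
      unfolding herm_inner_def
    proof (rule sum.cong[OF refl])
      fix i assume i: "i \<in> {..<N}"
      have a: "ps ! i \<in> ?F" using psF i by auto
      have "(poly PT (ps ! i) * poly (polyOf k2 \<beta>) (ps ! i)) ^ q = poly PT (ps ! i) * poly ?H (ps ! i)"
        using PTF[OF a] frob_polyOf2[OF c2 q, of k2 \<beta> "ps ! i"] a by (simp add: power_mult_distrib)
      thus "evC N ?p ?z1 False k1 \<alpha> i * evC N ?p ?z2 False k2 \<beta> i ^ q = poly (?G * ?H) (ps ! i) * poly PT (ps ! i)"
        using i by (simp add: evC_def)
    qed
    also have "\<dots> = (\<Sum>a\<in>?F. poly (?G * ?H * PT) a)" by (rule sumps)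
    also have "\<dots> = 0"
    proof (rule sumF)
      have "degree (?G * ?H * PT) \<le> degree ?G + degree ?H + degree PT"
        using degree_mult_le[of "?G * ?H" PT] degree_mult_le[of ?G ?H] by simp
      thus "degree (?G * ?H * PT) + 2 \<le> q"
        using degree_polyOf[OF k(1), of \<alpha>] degree_polyOf[OF k(2), of "\<lambda>j. \<beta> j ^ q"] dPT k N t by simp
    qed
    finally show ?thesis .
  qed
  have o21: "herm_inner q N (evC N ?p ?z2 False k2 \<beta>) (evC N ?p ?z1 False k1 \<alpha>) = 0" for \<alpha> \<beta>
  proof -
    have "herm_inner q N (evC N ?p ?z2 False k2 \<beta>) (evC N ?p ?z1 False k1 \<alpha>) =
          (herm_inner q N (evC N ?p ?z1 False k1 \<alpha>) (evC N ?p ?z2 False k2 \<beta>)) ^ q"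
      by (rule herm_swap[OF c2 q fx])
    also have "\<dots> = 0" unfolding o12 using q2 by simp
    finally show ?thesis .
  qed
  have o22: "herm_inner q N (evC N ?p ?z2 False k2 \<beta>) (evC N ?p ?z2 False k2 \<beta>') = 0" for \<beta> \<beta>'
  proof -
    let ?H = "polyOf k2 \<beta>" and ?H' = "polyOf k2 (\<lambda>j. \<beta>' j ^ q)"
    have "herm_inner q N (evC N ?p ?z2 False k2 \<beta>) (evC N ?p ?z2 False k2 \<beta>') =
          (\<Sum>i<N. poly (?H * ?H' * PT) (ps ! i) * poly PT (ps ! i))"
      unfolding herm_inner_def
    proof (rule sum.cong[OF refl])
      fix i assume i: "i \<in> {..<N}"
      have a: "ps ! i \<in> ?F" using psF i by auto
      have "(poly PT (ps ! i) * poly (polyOf k2 \<beta>') (ps ! i)) ^ q = poly PT (ps ! i) * poly ?H' (ps ! i)"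
        using PTF[OF a] frob_polyOf2[OF c2 q, of k2 \<beta>' "ps ! i"] a by (simp add: power_mult_distrib)
      thus "evC N ?p ?z2 False k2 \<beta> i * evC N ?p ?z2 False k2 \<beta>' i ^ q = poly (?H * ?H' * PT) (ps ! i) * poly PT (ps ! i)"
        using i by (simp add: evC_def algebra_simps)
    qed
    also have "\<dots> = (\<Sum>a\<in>?F. poly (?H * ?H' * PT * PT) a)" by (rule sumps)
    also have "\<dots> = 0"
    proof (cases "2*t + 2*k2 \<le> q")
      case True
      show ?thesis
      proof (rule sumF)
        have "degree (?H * ?H' * PT * PT) \<le> degree ?H + degree ?H' + degree PT + degree PT"
          using degree_mult_le[of "?H * ?H' * PT" PT] degree_mult_le[of "?H * ?H'" PT] degree_mult_le[of ?H ?H'] by simp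
        thus "degree (?H * ?H' * PT * PT) + 2 \<le> q"
          using degree_polyOf[OF k(2), of \<beta>] degree_polyOf[OF k(2), of "\<lambda>j. \<beta>' j ^ q"] dPT True k(2) by linarith
      qed
    next
      case False
      hence k21: "k2 = 1" and t2: "t + 2 \<le> q" using so by auto
      have "(\<Sum>a\<in>?F. poly (?H * ?H' * PT * PT) a) = (\<Sum>a\<in>?F. (\<beta> 0 * \<beta>' 0 ^ q) * (poly PT a)^2)"
        by (rule sum.cong[OF refl]) (simp add: k21 poly_polyOf power2_eq_square)
      also have "\<dots> = (\<beta> 0 * \<beta>' 0 ^ q) * (\<Sum>a\<in>?F. poly PT a)^(2^1)"
      proof -
        have fs: "(\<Sum>a\<in>?F. poly PT a)^(2^1) = (\<Sum>a\<in>?F. (poly PT a)^(2^1))"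
          by (rule frob_sum[OF c2])
        show ?thesis unfolding fs by (simp add: sum_distrib_left)
      qed
      also have "(\<Sum>a\<in>?F. poly PT a) = 0" by (rule sumF) (use dPT t2 in simp)
      finally show ?thesis by simp
    qed
    finally show ?thesis .
  qed
  show ?thesis
  proof (rule product_code[where ?B1.0 = "evB N ?p ?z1 False k1" and ?B2.0 = "evB N ?p ?z2 False k2"
        and ?S1.0 = "evC N ?p ?z1 False k1" and ?S2.0 = "evC N ?p ?z2 False k2"
        and N = "N" and \<mu> = 0 and ?d1.0 = "N + 1 - k1" and ?d2.0 = "N + 1 - k2" and r = r])
    show "\<And>\<alpha>. evC N ?p ?z1 False k1 \<alpha> = (\<Sum>j<k1. scaleF (\<alpha> j) (evB N ?p ?z1 False k1 j))"
      by (rule evC_sum[OF k(1), symmetric])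
    show "\<And>\<beta>. evC N ?p ?z2 False k2 \<beta> = (\<Sum>j<k2. scaleF (\<beta> j) (evB N ?p ?z2 False k2 j))"
      by (rule evC_sum[OF k(2), symmetric])
    show "\<And>j. evB N ?p ?z1 False k1 j \<in> vecs N" using evB_vecs[where fl=False] by simp
    show "\<And>j. evB N ?p ?z2 False k2 j \<in> vecs N" using evB_vecs[where fl=False] by simp
    show "\<And>\<alpha>. evC N ?p ?z1 False k1 \<alpha> = 0 \<Longrightarrow> \<forall>j<k1. \<alpha> j = 0"
      by (rule evC_indep[OF inj]) (use Z1 k in simp_all)
    show "\<And>\<beta>. evC N ?p ?z2 False k2 \<beta> = 0 \<Longrightarrow> \<forall>j<k2. \<beta> j = 0"
      by (rule evC_indep[OF inj]) (use Z2 k in simp_all)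
    show "N + 1 - k1 \<le> wt N (evC N ?p ?z1 False k1 \<alpha>)" if a: "\<exists>j<k1. \<alpha> j \<noteq> 0" for \<alpha>
    proof -
      have "card {i. i < N \<and> ?z1 i \<noteq> 0} + 1 - k1 + (if False then 1 else 0) \<le> wt (N + (if False then 1 else 0)) (evC N ?p ?z1 False k1 \<alpha>)"
        by (rule evC_weight[OF inj _ k(1) a]) (use Z1 k in simp)
      thus ?thesis unfolding Z1 by simp
    qed
    show "N + 1 - k2 \<le> wt N (evC N ?p ?z2 False k2 \<beta>)" if a: "\<exists>j<k2. \<beta> j \<noteq> 0" for \<beta>
    proof -
      have "card {i. i < N \<and> ?z2 i \<noteq> 0} + 1 - k2 + (if False then 1 else 0) \<le> wt (N + (if False then 1 else 0)) (evC N ?p ?z2 False k2 \<beta>)"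
        by (rule evC_weight[OF inj _ k(2) a]) (use Z2 k in simp)
      thus ?thesis unfolding Z2 by simp
    qed
    show "\<And>\<alpha> \<beta>. herm_inner q N (evC N ?p ?z1 False k1 \<alpha>) (evC N ?p ?z2 False k2 \<beta>) = 0" by (rule o12)
    show "\<And>\<alpha> \<beta>. herm_inner q N (evC N ?p ?z2 False k2 \<beta>) (evC N ?p ?z1 False k1 \<alpha>) = 0" by (rule o21)
    show "(0::'a) \<noteq> 1" by simp
    show "(0::'a) ^ (q + 1) = 1 \<or> (\<forall>\<beta> \<beta>'. herm_inner q N (evC N ?p ?z2 False k2 \<beta>) (evC N ?p ?z2 False k2 \<beta>') = 0)"
      using o22 by blast
    show "d \<le> 2 * (N + 1 - k1)" by (rule dd(1))
    show "d \<le> N + 1 - k2" by (rule dd(2))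
    show "(\<exists>\<alpha>. (\<exists>j<k1. \<alpha> j \<noteq> 0) \<and> 2 * wt N (evC N ?p ?z1 False k1 \<alpha>) = d) \<or>
      ((0::'a) = 0 \<and> (\<exists>\<beta>. (\<exists>j<k2. \<beta> j \<noteq> 0) \<and> wt N (evC N ?p ?z2 False k2 \<beta>) = d))"
      using dd(3)
    proof
      assume e: "2*(N + 1 - k1) = d"
      have "k1 \<le> card {i. i < N \<and> ?z1 i \<noteq> 0}" using Z1 k by simp
      from evC_witness[OF inj this k(1), where fl=False] obtain \<alpha> where
        a: "\<alpha> (k1 - 1) = 1" "wt N (evC N ?p ?z1 False k1 \<alpha>) = N + 1 - k1" using Z1 by auto
      have "\<exists>j<k1. \<alpha> j \<noteq> 0" using a(1) k(1) by (intro exI[of _ "k1 - 1"]) auto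
      thus ?thesis using a(2) e by auto
    next
      assume e: "N + 1 - k2 = d"
      have "k2 \<le> card {i. i < N \<and> ?z2 i \<noteq> 0}" using Z2 k by simp
      from evC_witness[OF inj this k(2), where fl=False] obtain \<beta> where
        a: "\<beta> (k2 - 1) = 1" "wt N (evC N ?p ?z2 False k2 \<beta>) = N + 1 - k2" using Z2 by auto
      have "\<exists>j<k2. \<beta> j \<noteq> 0" using a(1) k(2) by (intro exI[of _ "k2 - 1"]) auto
      thus ?thesis using a(2) e by auto
    qed
    show "2 * N \<le> n" using n by simp
    show "(2::'a) = 0" by (rule c2)
    show "q = 2^r" by (rule q)
  qed
qed

lemma large_code2:
  assumes cU: "card (UNIV::'a::field set) = q*q" and q: "q = 2^r" and r: "r > 0"
    and e: "e \<le> 1" and m: "m = e + 2*t"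
    and k: "m + k1 + k2 = q*q + 1" "k1 \<ge> 1" "k2 \<ge> 1" "k1 + e \<le> q*q"
    and dd: "d = 2 * (q*q - e + 2 - k1)" "d \<le> q*q + 2 - k2"
    and n: "n = 2*(q*q+1)"
  shows "\<exists>C::(nat \<Rightarrow> 'a) set. linear_code n (k1+k2) d C \<and> herm_self_orth q n C"
proof -
  have "(2::nat)^1 \<le> 2^r" using r by (intro power_increasing) auto
  hence q2: "q \<ge> 2" using q by simp
  have "2 * 1 \<le> q * q" using q2 by (intro mult_le_mono) auto
  hence fin: "finite (UNIV::'a set)" using cU card.infinite by force
  have c2: "(2::'a) = 0"
  proof -
    have "card (UNIV::'a set) = 2^(r+r)" using cU q by (simp add: power_add)
    thus ?thesis by (rule char2_of_card) (use r in simp)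
  qed
  obtain R :: "'a poly" where R: "degree R = 2" "coeff R 2 = 1" "\<forall>x. poly R x \<noteq> 0"
    using rootless_quadratic[OF fin c2] by blast
  have P: "coeff (monom 1 e * R^t) (e + 2*t) = 1 \<and> degree (monom 1 e * R^t) = e + 2*t
     \<and> card {x. poly (monom 1 e * R^t) x = 0} = e" by (rule poly_xR[OF R e])
  show ?thesis
    by (rule large_code[OF cU q r, of "monom 1 e * R^t" m e]) (use P m k dd n in auto)
qed

theorem theorem16:
  assumes "card (UNIV :: 'a::field set) = 16" and "card (UNIV :: 'b::field set) = 64"
  shows "(\<forall>(n, k, d) \<in> set [(4,2,2), (6,3,3), (8,4,4), (34,15,14), (34,16,12), (34,17,10)].
            \<exists>C :: (nat \<Rightarrow> 'a::field) set. linear_code n k d C \<and> herm_self_orth 4 n C)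
       \<and> (\<forall>(n, k, d) \<in> set [(4,2,2), (6,3,3), (8,4,4), (10,4,5), (10,5,4), (12,5,6), (12,6,5),
                            (14,5,7), (14,7,6), (16,6,8), (16,7,7), (16,8,6), (130,45,58),
                            (130,50,48), (130,55,38), (130,60,28), (130,65,18)].
            \<exists>C :: (nat \<Rightarrow> 'b::field) set. linear_code n k d C \<and> herm_self_orth 8 n C)"
proof -
  have a: "card (UNIV :: 'a set) = 4*4" using assms(1) by simp
  have b: "card (UNIV :: 'b set) = 8*8" using assms(2) by simp
  have q4: "(4::nat) = 2^2" by simp
  have q8: "(8::nat) = 2^3" by simp
  have a1: "\<exists>C :: (nat \<Rightarrow> 'a) set. linear_code 4 2 2 C \<and> herm_self_orth 4 4 C"
  proof -
    have "\<exists>C :: (nat \<Rightarrow> 'a) set. linear_code 4 (1+1) 2 C \<and> herm_self_orth 4 4 C"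
      by (rule small_code[OF a q4, where t=2 and N=2]) auto
    thus ?thesis by (simp only: one_add_one numeral_plus_one one_plus_numeral numeral_plus_numeral add_num_simps)
  qed
  have a2: "\<exists>C :: (nat \<Rightarrow> 'a) set. linear_code 6 3 3 C \<and> herm_self_orth 4 6 C"
  proof -
    have "\<exists>C :: (nat \<Rightarrow> 'a) set. linear_code 6 (2+1) 3 C \<and> herm_self_orth 4 6 C"
      by (rule small_code[OF a q4, where t=1 and N=3]) auto
    thus ?thesis by (simp only: one_add_one numeral_plus_one one_plus_numeral numeral_plus_numeral add_num_simps)
  qed
  have a3: "\<exists>C :: (nat \<Rightarrow> 'a) set. linear_code 8 4 4 C \<and> herm_self_orth 4 8 C"
  proof -
    have "\<exists>C :: (nat \<Rightarrow> 'a) set. linear_code 8 (3+1) 4 C \<and> herm_self_orth 4 8 C"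
      by (rule small_code[OF a q4, where t=0 and N=4]) auto
    thus ?thesis by (simp only: one_add_one numeral_plus_one one_plus_numeral numeral_plus_numeral add_num_simps)
  qed
  have a4: "\<exists>C :: (nat \<Rightarrow> 'a) set. linear_code 34 15 14 C \<and> herm_self_orth 4 34 C"
  proof -
    have "\<exists>C :: (nat \<Rightarrow> 'a) set. linear_code 34 (11+4) 14 C \<and> herm_self_orth 4 34 C"
      by (rule large_code2[OF a q4, where e=0 and t=1 and m=2]) auto
    thus ?thesis by (simp only: one_add_one numeral_plus_one one_plus_numeral numeral_plus_numeral add_num_simps)
  qed
  have a5: "\<exists>C :: (nat \<Rightarrow> 'a) set. linear_code 34 16 12 C \<and> herm_self_orth 4 34 C"
  proof -
    have "\<exists>C :: (nat \<Rightarrow> 'a) set. linear_code 34 (11+5) 12 C \<and> herm_self_orth 4 34 C"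
      by (rule large_code2[OF a q4, where e=1 and t=0 and m=1]) auto
    thus ?thesis by (simp only: one_add_one numeral_plus_one one_plus_numeral numeral_plus_numeral add_num_simps)
  qed
  have a6: "\<exists>C :: (nat \<Rightarrow> 'a) set. linear_code 34 17 10 C \<and> herm_self_orth 4 34 C"
  proof -
    have "\<exists>C :: (nat \<Rightarrow> 'a) set. linear_code 34 (13+4) 10 C \<and> herm_self_orth 4 34 C"
      by (rule large_code2[OF a q4, where e=0 and t=0 and m=0]) auto
    thus ?thesis by (simp only: one_add_one numeral_plus_one one_plus_numeral numeral_plus_numeral add_num_simps)
  qed
  have b1: "\<exists>C :: (nat \<Rightarrow> 'b) set. linear_code 4 2 2 C \<and> herm_self_orth 8 4 C"
  proof -
    have "\<exists>C :: (nat \<Rightarrow> 'b) set. linear_code 4 (1+1) 2 C \<and> herm_self_orth 8 4 C"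
      by (rule small_code[OF b q8, where t=6 and N=2]) auto
    thus ?thesis by (simp only: one_add_one numeral_plus_one one_plus_numeral numeral_plus_numeral add_num_simps)
  qed
  have b2: "\<exists>C :: (nat \<Rightarrow> 'b) set. linear_code 6 3 3 C \<and> herm_self_orth 8 6 C"
  proof -
    have "\<exists>C :: (nat \<Rightarrow> 'b) set. linear_code 6 (2+1) 3 C \<and> herm_self_orth 8 6 C"
      by (rule small_code[OF b q8, where t=5 and N=3]) auto
    thus ?thesis by (simp only: one_add_one numeral_plus_one one_plus_numeral numeral_plus_numeral add_num_simps)
  qed
  have b3: "\<exists>C :: (nat \<Rightarrow> 'b) set. linear_code 8 4 4 C \<and> herm_self_orth 8 8 C"
  proof -
    have "\<exists>C :: (nat \<Rightarrow> 'b) set. linear_code 8 (3+1) 4 C \<and> herm_self_orth 8 8 C"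
      by (rule small_code[OF b q8, where t=4 and N=4]) auto
    thus ?thesis by (simp only: one_add_one numeral_plus_one one_plus_numeral numeral_plus_numeral add_num_simps)
  qed
  have b4: "\<exists>C :: (nat \<Rightarrow> 'b) set. linear_code 10 4 5 C \<and> herm_self_orth 8 10 C"
  proof -
    have "\<exists>C :: (nat \<Rightarrow> 'b) set. linear_code 10 (3+1) 5 C \<and> herm_self_orth 8 10 C"
      by (rule small_code[OF b q8, where t=3 and N=5]) auto
    thus ?thesis by (simp only: one_add_one numeral_plus_one one_plus_numeral numeral_plus_numeral add_num_simps)
  qed
  have b5: "\<exists>C :: (nat \<Rightarrow> 'b) set. linear_code 10 5 4 C \<and> herm_self_orth 8 10 C"
  proof -
    have "\<exists>C :: (nat \<Rightarrow> 'b) set. linear_code 10 (4+1) 4 C \<and> herm_self_orth 8 10 C"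
      by (rule small_code[OF b q8, where t=3 and N=5]) auto
    thus ?thesis by (simp only: one_add_one numeral_plus_one one_plus_numeral numeral_plus_numeral add_num_simps)
  qed
  have b6: "\<exists>C :: (nat \<Rightarrow> 'b) set. linear_code 12 5 6 C \<and> herm_self_orth 8 12 C"
  proof -
    have "\<exists>C :: (nat \<Rightarrow> 'b) set. linear_code 12 (4+1) 6 C \<and> herm_self_orth 8 12 C"
      by (rule small_code[OF b q8, where t=2 and N=6]) auto
    thus ?thesis by (simp only: one_add_one numeral_plus_one one_plus_numeral numeral_plus_numeral add_num_simps)
  qed
  have b7: "\<exists>C :: (nat \<Rightarrow> 'b) set. linear_code 12 6 5 C \<and> herm_self_orth 8 12 C"
  proof -
    have "\<exists>C :: (nat \<Rightarrow> 'b) set. linear_code 12 (4+2) 5 C \<and> herm_self_orth 8 12 C"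
      by (rule small_code[OF b q8, where t=2 and N=6]) auto
    thus ?thesis by (simp only: one_add_one numeral_plus_one one_plus_numeral numeral_plus_numeral add_num_simps)
  qed
  have b8: "\<exists>C :: (nat \<Rightarrow> 'b) set. linear_code 14 5 7 C \<and> herm_self_orth 8 14 C"
  proof -
    have "\<exists>C :: (nat \<Rightarrow> 'b) set. linear_code 14 (4+1) 7 C \<and> herm_self_orth 8 14 C"
      by (rule small_code[OF b q8, where t=1 and N=7]) auto
    thus ?thesis by (simp only: one_add_one numeral_plus_one one_plus_numeral numeral_plus_numeral add_num_simps)
  qed
  have b9: "\<exists>C :: (nat \<Rightarrow> 'b) set. linear_code 14 7 6 C \<and> herm_self_orth 8 14 C"
  proof -
    have "\<exists>C :: (nat \<Rightarrow> 'b) set. linear_code 14 (5+2) 6 C \<and> herm_self_orth 8 14 C"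
      by (rule small_code[OF b q8, where t=1 and N=7]) auto
    thus ?thesis by (simp only: one_add_one numeral_plus_one one_plus_numeral numeral_plus_numeral add_num_simps)
  qed
  have b10: "\<exists>C :: (nat \<Rightarrow> 'b) set. linear_code 16 6 8 C \<and> herm_self_orth 8 16 C"
  proof -
    have "\<exists>C :: (nat \<Rightarrow> 'b) set. linear_code 16 (5+1) 8 C \<and> herm_self_orth 8 16 C"
      by (rule small_code[OF b q8, where t=0 and N=8]) auto
    thus ?thesis by (simp only: one_add_one numeral_plus_one one_plus_numeral numeral_plus_numeral add_num_simps)
  qed
  have b11: "\<exists>C :: (nat \<Rightarrow> 'b) set. linear_code 16 7 7 C \<and> herm_self_orth 8 16 C"
  proof -
    have "\<exists>C :: (nat \<Rightarrow> 'b) set. linear_code 16 (5+2) 7 C \<and> herm_self_orth 8 16 C"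
      by (rule small_code[OF b q8, where t=0 and N=8]) auto
    thus ?thesis by (simp only: one_add_one numeral_plus_one one_plus_numeral numeral_plus_numeral add_num_simps)
  qed
  have b12: "\<exists>C :: (nat \<Rightarrow> 'b) set. linear_code 16 8 6 C \<and> herm_self_orth 8 16 C"
  proof -
    have "\<exists>C :: (nat \<Rightarrow> 'b) set. linear_code 16 (6+2) 6 C \<and> herm_self_orth 8 16 C"
      by (rule small_code[OF b q8, where t=0 and N=8]) auto
    thus ?thesis by (simp only: one_add_one numeral_plus_one one_plus_numeral numeral_plus_numeral add_num_simps)
  qed
  have b13: "\<exists>C :: (nat \<Rightarrow> 'b) set. linear_code 130 45 58 C \<and> herm_self_orth 8 130 C"
  proof -
    have "\<exists>C :: (nat \<Rightarrow> 'b) set. linear_code 130 (37+8) 58 C \<and> herm_self_orth 8 130 C"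
      by (rule large_code2[OF b q8, where e=0 and t=10 and m=20]) auto
    thus ?thesis by (simp only: one_add_one numeral_plus_one one_plus_numeral numeral_plus_numeral add_num_simps)
  qed
  have b14: "\<exists>C :: (nat \<Rightarrow> 'b) set. linear_code 130 50 48 C \<and> herm_self_orth 8 130 C"
  proof -
    have "\<exists>C :: (nat \<Rightarrow> 'b) set. linear_code 130 (41+9) 48 C \<and> herm_self_orth 8 130 C"
      by (rule large_code2[OF b q8, where e=1 and t=7 and m=15]) auto
    thus ?thesis by (simp only: one_add_one numeral_plus_one one_plus_numeral numeral_plus_numeral add_num_simps)
  qed
  have b15: "\<exists>C :: (nat \<Rightarrow> 'b) set. linear_code 130 55 38 C \<and> herm_self_orth 8 130 C"
  proof -
    have "\<exists>C :: (nat \<Rightarrow> 'b) set. linear_code 130 (47+8) 38 C \<and> herm_self_orth 8 130 C"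
      by (rule large_code2[OF b q8, where e=0 and t=5 and m=10]) auto
    thus ?thesis by (simp only: one_add_one numeral_plus_one one_plus_numeral numeral_plus_numeral add_num_simps)
  qed
  have b16: "\<exists>C :: (nat \<Rightarrow> 'b) set. linear_code 130 60 28 C \<and> herm_self_orth 8 130 C"
  proof -
    have "\<exists>C :: (nat \<Rightarrow> 'b) set. linear_code 130 (51+9) 28 C \<and> herm_self_orth 8 130 C"
      by (rule large_code2[OF b q8, where e=1 and t=2 and m=5]) auto
    thus ?thesis by (simp only: one_add_one numeral_plus_one one_plus_numeral numeral_plus_numeral add_num_simps)
  qed
  have b17: "\<exists>C :: (nat \<Rightarrow> 'b) set. linear_code 130 65 18 C \<and> herm_self_orth 8 130 C"
  proof -
    have "\<exists>C :: (nat \<Rightarrow> 'b) set. linear_code 130 (57+8) 18 C \<and> herm_self_orth 8 130 C"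
      by (rule large_code2[OF b q8, where e=0 and t=0 and m=0]) auto
    thus ?thesis by (simp only: one_add_one numeral_plus_one one_plus_numeral numeral_plus_numeral add_num_simps)
  qed
  show ?thesis
    using a1 a2 a3 a4 a5 a6 b1 b2 b3 b4 b5 b6 b7 b8 b9 b10 b11 b12 b13 b14 b15 b16 b17
    by simp
qed


end
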